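(* Consider the gossip algorithm described in the context, under the standing assumptions stated there. Let $Z(k)=H\bar H\tilde x(k)$ and $\alpha_{k,\max}=\max_{i\in V}\alpha_{k,i}$. Then (i) $\sum_{k=0}^{\infty}\alpha_{k,\max}\|\tilde x(k)-Z(k)\|<\infty$ almost surely; (ii) $\sum_{k=0}^{\infty}\|\tilde x(k)-Z(k)\|^2<\infty$ almost surely.
   Context: Graphs and matrices. Let $V=\{1,\ldots,N\}$, $N\ge2$, and let $G_I=(V,E_I)$ (interference graph) be a connected undirected graph which is not complete, with adjacency matrix $A$; $B=A+I_N$. For $i\in V$: $N_I(i)$ is the neighbor set of $i$ in $G_I$, $\tilde N_I(i)=N_I(i)\cup\{i\}$, $m_i=\deg_{G_I}(i)+1$; $m=\sum_i m_i$. For $i,j\in V$: $s_{ij}=\sum_{l=1}^{j}B(i,l)+\sum_{r=1}^{i-1}m_r$; $E_j^i=e_{s_{ij}}\in\mathbb{R}^m$ if $j\in\tilde N_I(i)$, $E_j^i=\mathbf 0_m$ otherwise ($e_1,\dots,e_m$ standard basis of $\mathbb{R}^m$). $H=[\sum_iE_1^i,\ldots,\sum_iE_N^i]\in\mathbb{R}^{m\times N}$, $\bar H=\mathrm{diag}(1/m_1,\ldots,1/m_N)H^T$. The communication graph $G_C=(V,E_C)$ satisfies $G_m\subseteq G_C\subseteq G_I$ for a maximal triangle-free spanning subgraph $G_m$ of $G_I$ (triangle-free, spanning, and adding any edge of $G_I$ not in $G_m$ creates a triangle); $N_C(i)$ is the neighbor set of $i$ in $G_C$. $\mathrm{ind}(i,j)=\tilde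 N_I(i)\cap\tilde N_I(j)$ and $W_{ij}=I_m-\tfrac12\sum_{l\in\mathrm{ind}(i,j)}(E_l^i-E_l^j)(E_l^i-E_l^j)^T$. Game. Player $i$ has action set $\Omega_i\subset\mathbb{R}$, nonempty, compact and convex, and cost $J_i:\Omega^i\to\mathbb{R}$, $\Omega^i=\prod_{j\in\tilde N_I(i)}\Omega_j$, written $J_i(x_i,x_{-i}^i)$ with $x_{-i}^i\in\prod_{j\in N_I(i)}\Omega_j$; $J_i$ is continuously differentiable in $x_i$, jointly continuous in $x^i$, and convex in $x_i$ for every $x_{-i}^i$. $T_{\Omega_i}$ denotes Euclidean projection onto $\Omega_i$. Algorithm. The state is $\tilde x(k)\in\mathbb{R}^m$, whose entry at position $s_{ij}$ ($i\in V$, $j\in\tilde N_I(i)$) is $\tilde x_j^i(k)\in\Omega_j$, player $i$'s temporary estimate of player $j$'s action; the actions are $x_i(k)=\tilde x_i^i(k)$ and $x(k)=(x_1(k),\dots,x_N(k))$. Initial values $\tilde x^i(0)\in\Omega^i$ are arbitrary. At iteration $k$: $i_k$ is drawn uniformly from $V$ and $j_k$ uniformly from $N_C(i_k)$, independently of the past; $W(k)=W_{i_kj_k}$; $\bar x(k)=W(k)\tilde x(k)$; $\hat x_{-i}^i(k)=(\bar x_{s_{ij}}(k))_{j\in N_I(i)}$; for $i\in\{i_k,j_k\}$, $x_i(k+1)=T_{\Omega_i}[x_i(k)-\alpha_{k,i}\nabla_{x_i}J_i(x_i(k),\hat x_{-i}^i(k))]$, and $x_i(k+1)=x_i(k)$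 otherwise; then $\tilde x_j^i(k+1)=\bar x_{s_{ij}}(k)$ for $j\in N_I(i)$ and $\tilde x_i^i(k+1)=x_i(k+1)$. The step sizes are $\alpha_{k,i}=1/\nu_k(i)$, where $\nu_k(i)$ is the number of updates player $i$ has made up to time $k$; they satisfy $\sum_k\alpha_{k,i}^2<\infty$ and $\sum_k\alpha_{k,i}=\infty$ for all $i$. *)

theory Defs
  imports "HOL-Analysis.Analysis" "HOL-Probability.Probability"
begin

text \<open>Vertices are V = {1..N}. A graph on V is a relation (nat => nat => bool);
  vectors of R^m are functions nat => real read on the indices 1..m, and
  matrices are functions nat => nat => real read on the relevant index ranges.\<close>

definition nbI :: "(nat \<Rightarrow> nat \<Rightarrow> bool) \<Rightarrow> nat \<Rightarrow> nat \<Rightarrow> nat set" where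
  "nbI EI N i = {j \<in> {1..N}. EI i j}"

definition nbIt :: "(nat \<Rightarrow> nat \<Rightarrow> bool) \<Rightarrow> nat \<Rightarrow> nat \<Rightarrow> nat set" where
  "nbIt EI N i = insert i (nbI EI N i)"

definition mi :: "(nat \<Rightarrow> nat \<Rightarrow> bool) \<Rightarrow> nat \<Rightarrow> nat \<Rightarrow> nat" where
  "mi EI N i = card (nbI EI N i) + 1"

definition mtot :: "(nat \<Rightarrow> nat \<Rightarrow> bool) \<Rightarrow> nat \<Rightarrow> nat" where
  "mtot EI N = (\<Sum>i=1..N. mi EI N i)"

definition Bmat :: "(nat \<Rightarrow> nat \<Rightarrow> bool) \<Rightarrow> nat \<Rightarrow> nat \<Rightarrow> nat" where
  "Bmat EI i l = (if EI i l then 1 else 0) + (if i = l then 1 else 0)"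

definition spos :: "(nat \<Rightarrow> nat \<Rightarrow> bool) \<Rightarrow> nat \<Rightarrow> nat \<Rightarrow> nat \<Rightarrow> nat" where
  "spos EI N i j = (\<Sum>l=1..j. Bmat EI i l) + (\<Sum>r=1..<i. mi EI N r)"

definition Evec :: "(nat \<Rightarrow> nat \<Rightarrow> bool) \<Rightarrow> nat \<Rightarrow> nat \<Rightarrow> nat \<Rightarrow> nat \<Rightarrow> real" where
  "Evec EI N i j = (\<lambda>p. if j \<in> nbIt EI N i \<and> p = spos EI N i j then 1 else 0)"

definition ind :: "(nat \<Rightarrow> nat \<Rightarrow> bool) \<Rightarrow> nat \<Rightarrow> nat \<Rightarrow> nat \<Rightarrow> nat set" where
  "ind EI N i j = nbIt EI N i \<inter> nbIt EI N j"

definition Wmat :: "(nat \<Rightarrow> nat \<Rightarrow> bool) \<Rightarrow> nat \<Rightarrow> nat \<Rightarrow> nat \<Rightarrow> nat \<Rightarrow> nat \<Rightarrow> real" where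
  "Wmat EI N i j = (\<lambda>p q. (if p = q then 1 else 0)
      - 1/2 * (\<Sum>l\<in>ind EI N i j. (Evec EI N i l p - Evec EI N j l p) * (Evec EI N i l q - Evec EI N j l q)))"

definition Hmat :: "(nat \<Rightarrow> nat \<Rightarrow> bool) \<Rightarrow> nat \<Rightarrow> nat \<Rightarrow> nat \<Rightarrow> real" where
  "Hmat EI N = (\<lambda>p j. \<Sum>i=1..N. Evec EI N i j p)"

definition Hbar :: "(nat \<Rightarrow> nat \<Rightarrow> bool) \<Rightarrow> nat \<Rightarrow> nat \<Rightarrow> nat \<Rightarrow> real" where
  "Hbar EI N = (\<lambda>j p. (1 / real (mi EI N j)) * Hmat EI N p j)"

definition mv :: "nat \<Rightarrow> (nat \<Rightarrow> nat \<Rightarrow> real) \<Rightarrow> (nat \<Rightarrow> real) \<Rightarrow> nat \<Rightarrow> real" where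
  "mv n A x = (\<lambda>p. \<Sum>q=1..n. A p q * x q)"

definition vnorm :: "nat \<Rightarrow> (nat \<Rightarrow> real) \<Rightarrow> real" where
  "vnorm n v = sqrt (\<Sum>p=1..n. (v p)\<^sup>2)"

definition Zvec :: "(nat \<Rightarrow> nat \<Rightarrow> bool) \<Rightarrow> nat \<Rightarrow> (nat \<Rightarrow> real) \<Rightarrow> nat \<Rightarrow> real" where
  "Zvec EI N x = mv N (Hmat EI N) (mv (mtot EI N) (Hbar EI N) x)"

definition triangle_free :: "nat \<Rightarrow> (nat \<Rightarrow> nat \<Rightarrow> bool) \<Rightarrow> bool" where
  "triangle_free N G = (\<not> (\<exists>a\<in>{1..N}. \<exists>b\<in>{1..N}. \<exists>c\<in>{1..N}. G a b \<and> G b c \<and> G a c))"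

definition graph_on :: "nat \<Rightarrow> (nat \<Rightarrow> nat \<Rightarrow> bool) \<Rightarrow> bool" where
  "graph_on N G = (\<forall>i j. G i j \<longrightarrow> i \<in> {1..N} \<and> j \<in> {1..N} \<and> i \<noteq> j \<and> G j i)"

definition max_triangle_free_spanning :: "nat \<Rightarrow> (nat \<Rightarrow> nat \<Rightarrow> bool) \<Rightarrow> (nat \<Rightarrow> nat \<Rightarrow> bool) \<Rightarrow> bool" where
  "max_triangle_free_spanning N GI G =
     (graph_on N G \<and> (\<forall>i j. G i j \<longrightarrow> GI i j) \<and> triangle_free N G \<and>
      (\<forall>i j. GI i j \<and> \<not> G i j \<longrightarrow> \<not> triangle_free N (\<lambda>a b. G a b \<or> (a = i \<and> b = j) \<or> (a = j \<and> b = i))))"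

definition connected_graph :: "nat \<Rightarrow> (nat \<Rightarrow> nat \<Rightarrow> bool) \<Rightarrow> bool" where
  "connected_graph N G = (\<forall>i\<in>{1..N}. \<forall>j\<in>{1..N}. G\<^sup>*\<^sup>* i j)"

definition complete_graph :: "nat \<Rightarrow> (nat \<Rightarrow> nat \<Rightarrow> bool) \<Rightarrow> bool" where
  "complete_graph N G = (\<forall>i\<in>{1..N}. \<forall>j\<in>{1..N}. i \<noteq> j \<longrightarrow> G i j)"

text \<open>Step sizes: nu_k(i) = number of updates of player i at iterations 0..k;
  alpha_{k,i} = 1/nu_k(i) (Isabelle convention 1/0 = 0 before the first update).\<close>
definition nu :: "(nat \<Rightarrow> nat \<times> nat) \<Rightarrow> nat \<Rightarrow> nat \<Rightarrow> nat" where
  "nu c k i = card {t \<in> {..k}. i = fst (c t) \<or> i = snd (c t)}"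

definition alpha :: "(nat \<Rightarrow> nat \<times> nat) \<Rightarrow> nat \<Rightarrow> nat \<Rightarrow> real" where
  "alpha c k i = 1 / real (nu c k i)"

definition alpha_max :: "nat \<Rightarrow> (nat \<Rightarrow> nat \<times> nat) \<Rightarrow> nat \<Rightarrow> real" where
  "alpha_max N c k = Max ((\<lambda>i. alpha c k i) ` {1..N})"

text \<open>The gossip iteration, as a function of the sequence of selected pairs c k = (i_k, j_k).
  Om i = Omega_i, G i x y = gradient of J_i in x_i at (x, y), where y holds the
  other coordinates x_{-i}^i (y j for j in N_I(i), 0 elsewhere).\<close>
primrec gossip_state ::
  "(nat \<Rightarrow> nat \<Rightarrow> bool) \<Rightarrow> nat \<Rightarrow> (nat \<Rightarrow> real set) \<Rightarrow> (nat \<Rightarrow> real \<Rightarrow> (nat \<Rightarrow> real) \<Rightarrow> real)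
   \<Rightarrow> (nat \<Rightarrow> real) \<Rightarrow> (nat \<Rightarrow> nat \<times> nat) \<Rightarrow> nat \<Rightarrow> nat \<Rightarrow> real" where
  "gossip_state EI N Om G x0 c 0 = x0"
| "gossip_state EI N Om G x0 c (Suc k) =
    (let x = gossip_state EI N Om G x0 c k;
         a = fst (c k); b = snd (c k);
         xb = mv (mtot EI N) (Wmat EI N a b) x;
         xhat = (\<lambda>i j. if j \<in> nbI EI N i then xb (spos EI N i j) else 0);
         xnew = (\<lambda>i. if i = a \<or> i = b
                     then closest_point (Om i)
                            (x (spos EI N i i) - alpha c k i * G i (x (spos EI N i i)) (xhat i))
                     else x (spos EI N i i))
     in (\<lambda>p. xb p + (\<Sum>i=1..N. Evec EI N i i p * (xnew i - xb (spos EI N i i)))))"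

definition Dom_other :: "(nat \<Rightarrow> nat \<Rightarrow> bool) \<Rightarrow> nat \<Rightarrow> (nat \<Rightarrow> real set) \<Rightarrow> nat \<Rightarrow> (nat \<Rightarrow> real) set" where
  "Dom_other EI N Om i = {y. (\<forall>j\<in>nbI EI N i. y j \<in> Om j) \<and> (\<forall>j. j \<notin> nbI EI N i \<longrightarrow> y j = 0)}"

end

theory Submission
  imports Defs
begin

locale gsetup =
  fixes N :: nat and EI :: "nat \<Rightarrow> nat \<Rightarrow> bool"
  assumes EIg: "graph_on N EI"
begin

abbreviation "nb \<equiv> nbI EI N"
abbreviation "nbt \<equiv> nbIt EI N"
abbreviation "sp \<equiv> spos EI N"
abbreviation "mm \<equiv> mtot EI N"
definition "off i = (\<Sum>r=1..<i. mi EI N r)"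

lemma EI_props: "EI i j \<Longrightarrow> i \<in> {1..N} \<and> j \<in> {1..N} \<and> i \<noteq> j \<and> EI j i"
  using EIg unfolding graph_on_def by blast

lemma EI_sym: "EI i j \<Longrightarrow> EI j i"
  using EI_props by blast

lemma EI_rng: "EI i j \<Longrightarrow> i \<in> {1..N} \<and> j \<in> {1..N}"
  using EI_props by blast

lemma EI_irr: "\<not> EI i i"
  using EI_props by blast

lemma nb_iff: "j \<in> nb i \<longleftrightarrow> EI i j"
  unfolding nbI_def using EI_rng by blast

lemma nb_sub: "nb i \<subseteq> {1..N}"
  unfolding nbI_def by auto

lemma finite_nb[simp]: "finite (nb i)"
  using nb_sub finite_subset by blast

lemma finite_nbt[simp]: "finite (nbt i)"
  unfolding nbIt_def by simp

lemma notin_nb: "i \<notin> nb i"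
  unfolding nb_iff by (rule EI_irr)

lemma nb_sym: "j \<in> nb i \<longleftrightarrow> i \<in> nb j"
  unfolding nb_iff by (metis EI_sym)

lemma nbt_iff: "j \<in> nbt i \<longleftrightarrow> j = i \<or> EI i j"
  using nb_iff[of j i] unfolding nbIt_def by simp

lemma nbt_sub: "i \<in> {1..N} \<Longrightarrow> nbt i \<subseteq> {1..N}"
  unfolding nbIt_def using nb_sub by simp

lemma nbt_sym: "j \<in> nbt i \<longleftrightarrow> i \<in> nbt j"
  unfolding nbt_iff by (metis EI_sym)

lemma self_nbt[simp]: "i \<in> nbt i"
  unfolding nbIt_def by simp

lemma mi_card: "mi EI N i = card (nbt i)"
  unfolding mi_def nbIt_def using notin_nb by simp

lemma Bmat_ind: "Bmat EI i l = (if l \<in> nbt i then 1 else 0)"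
  unfolding Bmat_def nbt_iff using EI_irr by auto

lemma pos_card: "(\<Sum>l'=1..l. Bmat EI i l') = card (nbt i \<inter> {1..l})"
proof -
  have "(\<Sum>l'=1..l. Bmat EI i l') = (\<Sum>l'\<in>{1..l}. if l' \<in> nbt i then 1 else 0)"
    by (simp add: Bmat_ind)
  also have "\<dots> = card ({1..l} \<inter> nbt i)"
    by (simp add: sum.If_cases)
  finally show ?thesis by (simp add: Int_commute)
qed

lemma sp_eq: "sp i l = card (nbt i \<inter> {1..l}) + off i"
  unfolding spos_def off_def pos_card by simp

lemma sp_range:
  assumes "i \<in> {1..N}" "l \<in> nbt i"
  shows "off i < sp i l \<and> sp i l \<le> off i + mi EI N i"
proof -
  have l1: "l \<in> {1..N}" using nbt_sub[OF assms(1)] assms(2) by (rule subsetD)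
  have "l \<in> nbt i \<inter> {1..l}" using assms l1 by auto
  hence "card (nbt i \<inter> {1..l}) \<ge> 1"
    by (metis One_nat_def Suc_leI card_gt_0_iff empty_iff finite_Int finite_nbt)
  moreover have "card (nbt i \<inter> {1..l}) \<le> card (nbt i)"
    by (simp add: card_mono)
  ultimately show ?thesis unfolding sp_eq mi_card by simp
qed

lemma off_mono:
  assumes "1 \<le> i" "i < i'"
  shows "off i + mi EI N i \<le> off i'"
proof -
  have "off i + mi EI N i = (\<Sum>r=1..<Suc i. mi EI N r)"
    unfolding off_def using assms by simp
  also have "\<dots> \<le> (\<Sum>r=1..<i'. mi EI N r)"
    by (rule sum_mono2) (use assms in auto)
  finally show ?thesis unfolding off_def .
qed

lemma off_last: "off (Suc N) = mm"
  unfolding off_def mtot_def by (simp add: atLeastLessThanSuc_atLeastAtMost)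

lemma pos_strict:
  assumes "l \<in> nbt i" "l' \<in> nbt i" "l < l'"
  shows "card (nbt i \<inter> {1..l}) < card (nbt i \<inter> {1..l'})"
proof (rule psubset_card_mono)
  show "finite (nbt i \<inter> {1..l'})" by simp
  have a: "l' \<in> nbt i \<inter> {1..l'}" "l' \<notin> nbt i \<inter> {1..l}"
    using assms by auto
  have "nbt i \<inter> {1..l} \<subseteq> nbt i \<inter> {1..l'}"
    using assms by auto
  then show "nbt i \<inter> {1..l} \<subset> nbt i \<inter> {1..l'}"
    using a by blast
qed

lemma sp_inj:
  assumes "i \<in> {1..N}" "l \<in> nbt i" "i' \<in> {1..N}" "l' \<in> nbt i'" "sp i l = sp i' l'"
  shows "i = i' \<and> l = l'"
proof -
  have ii: "i = i'"
  proof (rule ccontr)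
    assume "i \<noteq> i'"
    then consider "i < i'" | "i' < i" by linarith
    then show False
    proof cases
      case 1
      then show False using sp_range[OF assms(1,2)] sp_range[OF assms(3,4)] off_mono[of i i'] assms by auto
    next
      case 2
      then show False using sp_range[OF assms(1,2)] sp_range[OF assms(3,4)] off_mono[of i' i] assms by auto
    qed
  qed
  moreover have "l = l'"
  proof (rule ccontr)
    assume "l \<noteq> l'"
    then consider "l < l'" | "l' < l" by linarith
    then show False
    proof cases
      case 1
      have "card (nbt i \<inter> {1..l}) < card (nbt i \<inter> {1..l'})"
        using pos_strict[of l i l'] 1 assms ii by blast
      then show False using assms(5) ii unfolding sp_eq by simp
    next
      case 2
      have "card (nbt i \<inter> {1..l'}) < card (nbt i \<inter> {1..l})"
        using pos_strict[of l' i l] 2 assms ii by blast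
      then show False using assms(5) ii unfolding sp_eq by simp
    qed
  qed
  ultimately show ?thesis by simp
qed

lemma sp_in:
  assumes "i \<in> {1..N}" "l \<in> nbt i"
  shows "sp i l \<in> {1..mm}"
proof -
  have "off i + mi EI N i \<le> off (Suc N)"
    using assms by (intro off_mono) auto
  then show ?thesis using sp_range[OF assms] off_last by auto
qed

definition "PP = Sigma {1..N} nbt"

lemma card_PP: "card PP = mm"
  unfolding PP_def mtot_def by (simp add: card_SigmaI mi_card)

lemma sp_bij: "bij_betw (\<lambda>(i,l). sp i l) PP {1..mm}"
proof -
  have inj: "inj_on (\<lambda>(i,l). sp i l) PP"
    unfolding inj_on_def PP_def using sp_inj by auto
  have sub: "(\<lambda>(i,l). sp i l) ` PP \<subseteq> {1..mm}"
    unfolding PP_def using sp_in by auto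
  have "card ((\<lambda>(i,l). sp i l) ` PP) = mm"
    using card_image[OF inj] card_PP by simp
  then have "(\<lambda>(i,l). sp i l) ` PP = {1..mm}"
    using sub by (intro card_subset_eq) auto
  then show ?thesis using inj unfolding bij_betw_def by simp
qed

lemma sum_mm: "(\<Sum>p=1..mm. f p) = (\<Sum>i=1..N. \<Sum>l\<in>nbt i. f (sp i l))"
proof -
  have "(\<Sum>p=1..mm. f p) = (\<Sum>x\<in>PP. f ((\<lambda>(i,l). sp i l) x))"
    using sum.reindex_bij_betw[OF sp_bij, of f] by simp
  also have "\<dots> = (\<Sum>(i,l)\<in>PP. f (sp i l))"
    by (intro sum.cong refl) (simp add: split_def)
  also have "\<dots> = (\<Sum>i=1..N. \<Sum>l\<in>nbt i. f (sp i l))"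
    using sum.Sigma[of "{1..N}" nbt "\<lambda>i l. f (sp i l)"] unfolding PP_def by simp
  finally show ?thesis .
qed

lemma Evec_at:
  assumes "i' \<in> {1..N}" "i \<in> {1..N}" "l \<in> nbt i"
  shows "Evec EI N i' j (sp i l) = (if i' = i \<and> j = l then 1 else 0)"
proof -
  have "j \<in> nbt i' \<and> sp i l = sp i' j \<longleftrightarrow> i' = i \<and> j = l"
    using sp_inj[OF assms(2,3) assms(1), of j] assms by metis
  then show ?thesis unfolding Evec_def by (simp only:)
qed

lemma Evec_sum:
  assumes "i \<in> {1..N}"
  shows "(\<Sum>q=1..mm. Evec EI N i j q * s q) = (if j \<in> nbt i then s (sp i j) else 0)"
proof (cases "j \<in> nbt i")
  case True
  have "(\<Sum>q=1..mm. Evec EI N i j q * s q) = (\<Sum>q\<in>{1..mm}. if q = sp i j then s q else 0)"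
    unfolding Evec_def using True by (intro sum.cong) auto
  also have "\<dots> = s (sp i j)" using sp_in[OF assms True] by simp
  finally show ?thesis using True by simp
next
  case False
  then show ?thesis unfolding Evec_def by simp
qed


lemma mv_W:
  assumes "a \<in> {1..N}" "b \<in> {1..N}" "p \<in> {1..mm}"
  shows "mv mm (Wmat EI N a b) s p = s p - 1/2 * (\<Sum>l'\<in>ind EI N a b.
            (Evec EI N a l' p - Evec EI N b l' p) * (s (sp a l') - s (sp b l')))"
proof -
  let ?X = "\<lambda>l' q. Evec EI N a l' q - Evec EI N b l' q"
  have "mv mm (Wmat EI N a b) s p =
      (\<Sum>q=1..mm. (if p = q then 1 else 0) * s q - 1/2 * (\<Sum>l'\<in>ind EI N a b. ?X l' p * (?X l' q * s q)))"
    unfolding mv_def Wmat_def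
    by (intro sum.cong refl) (simp add: left_diff_distrib sum_distrib_right mult.assoc)
  also have "\<dots> = (\<Sum>q=1..mm. (if p = q then 1 else 0) * s q)
      - 1/2 * (\<Sum>q=1..mm. \<Sum>l'\<in>ind EI N a b. ?X l' p * (?X l' q * s q))"
    by (simp only: sum_subtractf sum_distrib_left)
  also have "(\<Sum>q=1..mm. \<Sum>l'\<in>ind EI N a b. ?X l' p * (?X l' q * s q))
      = (\<Sum>l'\<in>ind EI N a b. ?X l' p * (\<Sum>q=1..mm. ?X l' q * s q))"
    by (subst sum.swap) (simp add: sum_distrib_left)
  also have "(\<Sum>q=1..mm. (if p = q then 1 else 0) * s q) = s p"
  proof -
    have "(\<Sum>q=1..mm. (if p = q then 1 else 0) * s q) = (\<Sum>q\<in>{1..mm}. if p = q then s q else 0)"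
      by (rule sum.cong) auto
    then show ?thesis using assms(3) by simp
  qed
  also have "(\<Sum>l'\<in>ind EI N a b. ?X l' p * (\<Sum>q=1..mm. ?X l' q * s q))
      = (\<Sum>l'\<in>ind EI N a b. ?X l' p * (s (sp a l') - s (sp b l')))"
  proof (intro sum.cong refl)
    fix l' assume "l' \<in> ind EI N a b"
    then have "l' \<in> nbt a" "l' \<in> nbt b" unfolding ind_def by auto
    then have "(\<Sum>q=1..mm. ?X l' q * s q) = s (sp a l') - s (sp b l')"
      using Evec_sum[OF assms(1), of l' s] Evec_sum[OF assms(2), of l' s]
      by (simp add: left_diff_distrib sum_subtractf)
    then show "?X l' p * (\<Sum>q=1..mm. ?X l' q * s q) = ?X l' p * (s (sp a l') - s (sp b l'))"
      by simp
  qed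
  finally show ?thesis .
qed

lemma var_le:
  fixes w :: "nat \<Rightarrow> real"
  assumes "finite A" "A \<noteq> {}"
  shows "(\<Sum>i\<in>A. (w i - (\<Sum>j\<in>A. w j) / card A)\<^sup>2) \<le> (\<Sum>i\<in>A. (w i - z)\<^sup>2)"
proof -
  define mu where "mu = (\<Sum>j\<in>A. w j) / card A"
  define e where "e = mu - z"
  have cA: "real (card A) > 0" using assms by (simp add: card_gt_0_iff)
  have s0: "(\<Sum>i\<in>A. (w i - mu)) = 0"
    unfolding mu_def using cA by (simp add: sum_subtractf)
  have "(\<Sum>i\<in>A. (w i - z)\<^sup>2) = (\<Sum>i\<in>A. (w i - mu)\<^sup>2 + 2 * e * (w i - mu) + e\<^sup>2)"
    unfolding e_def by (intro sum.cong refl) (simp add: power2_eq_square algebra_simps)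
  also have "\<dots> = (\<Sum>i\<in>A. (w i - mu)\<^sup>2) + 2 * e * (\<Sum>i\<in>A. (w i - mu)) + card A * e\<^sup>2"
    by (simp add: sum.distrib sum_distrib_left)
  also have "\<dots> = (\<Sum>i\<in>A. (w i - mu)\<^sup>2) + card A * e\<^sup>2" using s0 by simp
  finally show ?thesis unfolding mu_def[symmetric] by simp
qed

lemma Hmat_sum:
  assumes j: "j \<in> {1..N}"
  shows "(\<Sum>q=1..mm. Hmat EI N q j * s q) = (\<Sum>i\<in>nbt j. s (sp i j))"
proof -
  have "(\<Sum>q=1..mm. Hmat EI N q j * s q) = (\<Sum>i=1..N. \<Sum>q=1..mm. Evec EI N i j q * s q)"
    unfolding Hmat_def sum_distrib_right by (rule sum.swap)
  also have "\<dots> = (\<Sum>i=1..N. if j \<in> nbt i then s (sp i j) else 0)"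
    by (intro sum.cong refl Evec_sum) auto
  also have "\<dots> = (\<Sum>i\<in>{i\<in>{1..N}. j \<in> nbt i}. s (sp i j))"
    by (rule sum.inter_filter[symmetric]) simp
  also have "{i\<in>{1..N}. j \<in> nbt i} = nbt j"
    using nbt_sub[OF j] nbt_sym by auto
  finally show ?thesis .
qed

lemma Z_at:
  assumes i: "i \<in> {1..N}" and l: "l \<in> nbt i"
  shows "Zvec EI N s (sp i l) = (\<Sum>i'\<in>nbt l. s (sp i' l)) / real (card (nbt l))"
proof -
  have l1: "l \<in> {1..N}" using nbt_sub[OF i] l by blast
  have H: "Hmat EI N (sp i l) j = (if j = l then 1 else 0)" for j
  proof -
    have "Hmat EI N (sp i l) j = (\<Sum>i'=1..N. if i' = i \<and> j = l then 1 else 0)"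
      unfolding Hmat_def using i l by (intro sum.cong refl) (simp add: Evec_at)
    also have "\<dots> = (if j = l then 1 else 0)" using i by (simp add: sum.If_cases)
    finally show ?thesis .
  qed
  have "Zvec EI N s (sp i l) = (\<Sum>j=1..N. (if j = l then 1 else 0) * mv mm (Hbar EI N) s j)"
    unfolding Zvec_def mv_def[of N] H ..
  also have "\<dots> = (\<Sum>j\<in>{1..N}. if j = l then mv mm (Hbar EI N) s j else 0)"
    by (rule sum.cong) auto
  also have "\<dots> = mv mm (Hbar EI N) s l" using l1 by simp
  also have "\<dots> = (\<Sum>q=1..mm. Hmat EI N q l * s q) / real (mi EI N l)"
    unfolding mv_def Hbar_def by (simp add: sum_divide_distrib)
  also have "\<dots> = (\<Sum>i'\<in>nbt l. s (sp i' l)) / real (card (nbt l))"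
    using Hmat_sum[OF l1] mi_card by simp
  finally show ?thesis .
qed

lemma vnorm_Z:
  fixes s :: "nat \<Rightarrow> real"
  shows "(vnorm mm (\<lambda>p. s p - Zvec EI N s p))\<^sup>2 \<le> (\<Sum>j=1..N. \<Sum>i\<in>nb j. (s (sp i j) - s (sp j j))\<^sup>2)"
proof -
  let ?av = "\<lambda>l. (\<Sum>i'\<in>nbt l. s (sp i' l)) / real (card (nbt l))"
  have "(vnorm mm (\<lambda>p. s p - Zvec EI N s p))\<^sup>2 = (\<Sum>p=1..mm. (s p - Zvec EI N s p)\<^sup>2)"
    unfolding vnorm_def by (simp add: sum_nonneg)
  also have "\<dots> = (\<Sum>i=1..N. \<Sum>l\<in>nbt i. (s (sp i l) - ?av l)\<^sup>2)"
    unfolding sum_mm by (intro sum.cong refl) (simp add: Z_at)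
  also have "\<dots> = (\<Sum>i=1..N. \<Sum>l\<in>{l\<in>{1..N}. l \<in> nbt i}. (s (sp i l) - ?av l)\<^sup>2)"
  proof (intro sum.cong refl)
    fix i assume "i \<in> {1..N}"
    then show "nbt i = {l\<in>{1..N}. l \<in> nbt i}" using nbt_sub by blast
  qed
  also have "\<dots> = (\<Sum>l=1..N. \<Sum>i\<in>{i\<in>{1..N}. l \<in> nbt i}. (s (sp i l) - ?av l)\<^sup>2)"
    by (rule sum.swap_restrict) auto
  also have "\<dots> = (\<Sum>l=1..N. \<Sum>i\<in>nbt l. (s (sp i l) - ?av l)\<^sup>2)"
  proof (intro sum.cong refl)
    fix l assume l: "l \<in> {1..N}"
    show "{i\<in>{1..N}. l \<in> nbt i} = nbt l" using nbt_sub[OF l] nbt_sym by auto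
  qed
  also have "\<dots> \<le> (\<Sum>l=1..N. \<Sum>i\<in>nbt l. (s (sp i l) - s (sp l l))\<^sup>2)"
    by (rule sum_mono, rule var_le) (auto simp: nbIt_def)
  also have "\<dots> = (\<Sum>l=1..N. \<Sum>i\<in>nb l. (s (sp i l) - s (sp l l))\<^sup>2)"
  proof (rule sum.cong[OF refl])
    fix l assume "l \<in> {1..N}"
    show "(\<Sum>i\<in>nbt l. (s (sp i l) - s (sp l l))\<^sup>2) = (\<Sum>i\<in>nb l. (s (sp i l) - s (sp l l))\<^sup>2)"
      unfolding nbIt_def using notin_nb by simp
  qed
  finally show ?thesis .
qed

definition xbv :: "(nat \<Rightarrow> real) \<Rightarrow> nat \<Rightarrow> nat \<Rightarrow> nat \<Rightarrow> nat \<Rightarrow> real" where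
  "xbv s a b i l = (if (i = a \<or> i = b) \<and> l \<in> ind EI N a b then (s (sp a l) + s (sp b l)) / 2 else s (sp i l))"

lemma W_apply:
  assumes "a \<in> {1..N}" "b \<in> {1..N}" "a \<noteq> b" "i \<in> {1..N}" "l \<in> nbt i"
  shows "mv mm (Wmat EI N a b) s (sp i l) = xbv s a b i l"
proof -
  let ?D = "\<lambda>l'. s (sp a l') - s (sp b l')"
  have "(\<Sum>l'\<in>ind EI N a b. (Evec EI N a l' (sp i l) - Evec EI N b l' (sp i l)) * ?D l')
      = (\<Sum>l'\<in>ind EI N a b. if l' = l then ((if a = i then 1 else 0) - (if b = i then 1 else 0)) * ?D l else 0)"
    using assms by (intro sum.cong refl) (simp add: Evec_at)
  also have "\<dots> = (if l \<in> ind EI N a b then ((if a = i then 1 else 0) - (if b = i then 1 else 0)) * ?D l else 0)"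
    by (subst sum.delta) (auto simp: ind_def)
  finally have e: "(\<Sum>l'\<in>ind EI N a b. (Evec EI N a l' (sp i l) - Evec EI N b l' (sp i l)) * ?D l') =
     (if l \<in> ind EI N a b then ((if a = i then 1 else 0) - (if b = i then 1 else 0)) * ?D l else 0)" .
  show ?thesis
    unfolding mv_W[OF assms(1,2) sp_in[OF assms(4,5)]] e xbv_def
    using assms(3) by (auto simp: field_simps)
qed

end

definition "pairS N EC = {(i,j). i \<in> {1..N} \<and> EC i j}"

locale gstate = gsetup +
  fixes Om :: "nat \<Rightarrow> real set" and G :: "nat \<Rightarrow> real \<Rightarrow> (nat \<Rightarrow> real) \<Rightarrow> real"
    and x0 :: "nat \<Rightarrow> real" and EC :: "nat \<Rightarrow> nat \<Rightarrow> bool"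
  assumes EC_EI: "\<And>i j. EC i j \<Longrightarrow> EI i j"
    and Om_ne: "\<And>i. i \<in> {1..N} \<Longrightarrow> Om i \<noteq> {}"
    and Om_compact: "\<And>i. i \<in> {1..N} \<Longrightarrow> compact (Om i)"
    and Om_convex: "\<And>i. i \<in> {1..N} \<Longrightarrow> convex (Om i)"
    and x0_in: "\<And>i j. i \<in> {1..N} \<Longrightarrow> j \<in> nbt i \<Longrightarrow> x0 (sp i j) \<in> Om j"
begin

abbreviation "st c k \<equiv> gossip_state EI N Om G x0 c k"
abbreviation "S \<equiv> pairS N EC"

lemma S_props:
  assumes "x \<in> S"
  shows "fst x \<in> {1..N} \<and> snd x \<in> {1..N} \<and> fst x \<noteq> snd x \<and> EI (fst x) (snd x)"
proof -
  obtain a b where x: "x = (a,b)" by fastforce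
  then have "EC a b" "a \<in> {1..N}" using assms unfolding pairS_def by auto
  then have "EI a b" using EC_EI by blast
  then show ?thesis using x EI_rng[of a b] EI_irr[of a] by auto
qed

lemma S_ind:
  assumes "(a,b) \<in> S"
  shows "a \<in> ind EI N a b" "b \<in> ind EI N a b"
  using S_props[OF assms] unfolding ind_def by (auto simp: nbt_iff EI_sym)

definition xh :: "(nat \<Rightarrow> real) \<Rightarrow> nat \<Rightarrow> nat \<Rightarrow> nat \<Rightarrow> nat \<Rightarrow> real" where
  "xh s a b i = (\<lambda>j. if j \<in> nb i then xbv s a b i j else 0)"

definition xnw :: "(nat \<Rightarrow> nat \<times> nat) \<Rightarrow> nat \<Rightarrow> (nat \<Rightarrow> real) \<Rightarrow> nat \<Rightarrow> nat \<Rightarrow> nat \<Rightarrow> real" where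
  "xnw c k s a b i = (if i = a \<or> i = b then closest_point (Om i) (s (sp i i) - alpha c k i * G i (s (sp i i)) (xh s a b i)) else s (sp i i))"

lemma st_Suc_at:
  assumes "c k = (a,b)" "(a,b) \<in> S" "i \<in> {1..N}" "l \<in> nbt i"
  shows "st c (Suc k) (sp i l) = (if l = i then xnw c k (st c k) a b i else xbv (st c k) a b i l)"
proof -
  have ab: "a \<in> {1..N}" "b \<in> {1..N}" "a \<noteq> b" using S_props[OF assms(2)] by auto
  define x where "x = st c k"
  define XB where "XB = mv mm (Wmat EI N a b) x"
  define XH where "XH = (\<lambda>i j. if j \<in> nb i then XB (sp i j) else 0)"
  define XN where "XN = (\<lambda>i. if i = a \<or> i = b then closest_point (Om i) (x (sp i i) - alpha c k i * G i (x (sp i i)) (XH i)) else x (sp i i))"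
  have st1: "st c (Suc k) = (\<lambda>p. XB p + (\<Sum>i=1..N. Evec EI N i i p * (XN i - XB (sp i i))))"
    unfolding XN_def XH_def XB_def x_def by (simp add: Let_def assms(1))
  have XB_at: "\<And>i l. i \<in> {1..N} \<Longrightarrow> l \<in> nbt i \<Longrightarrow> XB (sp i l) = xbv x a b i l"
    unfolding XB_def using W_apply ab by blast
  have XH_eq: "XH i = xh x a b i"
    unfolding XH_def xh_def using XB_at[OF assms(3)] by (auto simp: nbIt_def)
  have XN_eq: "XN i = xnw c k x a b i"
    unfolding XN_def xnw_def XH_eq by simp
  have "(\<Sum>i'=1..N. Evec EI N i' i' (sp i l) * (XN i' - XB (sp i' i')))
      = (\<Sum>i'\<in>{1..N}. if i' = i then (if l = i then XN i - XB (sp i i) else 0) else 0)"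
    using assms(3,4) by (intro sum.cong refl) (auto simp: Evec_at)
  also have "\<dots> = (if l = i then XN i - XB (sp i i) else 0)"
    using assms(3) by simp
  finally show ?thesis
    unfolding st1 using XB_at[OF assms(3,4)] XB_at[OF assms(3) self_nbt] XN_eq by (simp add: x_def)
qed

lemma xbv_in:
  assumes "(a,b) \<in> S" "i \<in> {1..N}" "l \<in> nbt i"
    and inv: "\<And>i l. i \<in> {1..N} \<Longrightarrow> l \<in> nbt i \<Longrightarrow> s (sp i l) \<in> Om l"
  shows "xbv s a b i l \<in> Om l"
proof (cases "(i = a \<or> i = b) \<and> l \<in> ind EI N a b")
  case True
  have ab: "a \<in> {1..N}" "b \<in> {1..N}" using S_props[OF assms(1)] by auto
  have "l \<in> nbt a" "l \<in> nbt b" using True unfolding ind_def by auto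
  then have "s (sp a l) \<in> Om l" "s (sp b l) \<in> Om l" using inv ab by auto
  moreover have "l \<in> {1..N}" using nbt_sub[OF assms(2)] assms(3) by (rule subsetD)
  ultimately have "(1/2) *\<^sub>R s (sp a l) + (1/2) *\<^sub>R s (sp b l) \<in> Om l"
    by (intro convexD Om_convex) auto
  then show ?thesis using True unfolding xbv_def by (simp add: add_divide_distrib)
next
  case False
  then have "xbv s a b i l = s (sp i l)" unfolding xbv_def by (rule if_not_P)
  then show ?thesis using inv assms by simp
qed

lemma xh_dom:
  assumes "(a,b) \<in> S" "i \<in> {1..N}"
    and inv: "\<And>i l. i \<in> {1..N} \<Longrightarrow> l \<in> nbt i \<Longrightarrow> s (sp i l) \<in> Om l"
  shows "xh s a b i \<in> Dom_other EI N Om i"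
  unfolding Dom_other_def xh_def using xbv_in[OF assms(1,2) _ inv] by (auto simp: nbIt_def)

lemma closed_Om: "i \<in> {1..N} \<Longrightarrow> closed (Om i)"
  using Om_compact compact_imp_closed by blast

lemma st_inv:
  assumes "\<forall>t<k. c t \<in> S" "i \<in> {1..N}" "l \<in> nbt i"
  shows "st c k (sp i l) \<in> Om l"
  using assms
proof (induction k arbitrary: i l)
  case 0
  then show ?case using x0_in by simp
next
  case (Suc k)
  obtain a b where cab: "c k = (a,b)" by fastforce
  have abS: "(a,b) \<in> S" using Suc.prems(1) cab by (metis lessI)
  have inv: "\<And>i l. i \<in> {1..N} \<Longrightarrow> l \<in> nbt i \<Longrightarrow> st c k (sp i l) \<in> Om l"
    using Suc.IH Suc.prems(1) by simp
  show ?case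
  proof (cases "l = i")
    case True
    then show ?thesis
      unfolding st_Suc_at[of c k a b, OF cab abS Suc.prems(2,3)] xnw_def
      using inv[OF Suc.prems(2) self_nbt] closest_point_in_set[OF closed_Om[OF Suc.prems(2)] Om_ne[OF Suc.prems(2)]]
      by auto
  next
    case False
    then show ?thesis
      unfolding st_Suc_at[of c k a b, OF cab abS Suc.prems(2,3)]
      using xbv_in[OF abS Suc.prems(2,3) inv] by simp
  qed
qed


lemma alpha_nonneg: "alpha c k i \<ge> 0"
  unfolding alpha_def by simp

definition "Vf (s::nat \<Rightarrow> real) = (\<Sum>j=1..N. \<Sum>i\<in>nb j. (s (sp i j) - s (sp j j))\<^sup>2)"
definition "Uf (s::nat \<Rightarrow> real) a b = (\<Sum>j=1..N. \<Sum>i\<in>nb j. (xbv s a b i j - s (sp j j))\<^sup>2)"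

lemma Vf_nonneg: "Vf s \<ge> 0"
  unfolding Vf_def by (simp add: sum_nonneg)

lemma sq_ineq:
  fixes u d e :: real
  assumes "e > 0"
  shows "(u - d)\<^sup>2 \<le> (1 + e) * u\<^sup>2 + (1 + 1/e) * d\<^sup>2"
proof -
  have "0 \<le> (e * u + d)\<^sup>2 / e" using assms by simp
  also have "(e * u + d)\<^sup>2 / e = e * u\<^sup>2 + 2 * u * d + d\<^sup>2 / e"
    using assms by (simp add: power2_eq_square field_simps)
  finally have 1: "- 2 * u * d \<le> e * u\<^sup>2 + d\<^sup>2 / e" by simp
  have 2: "(u - d)\<^sup>2 = u\<^sup>2 - 2 * u * d + d\<^sup>2" by (simp add: power2_eq_square algebra_simps)
  have 3: "(1 + e) * u\<^sup>2 + (1 + 1/e) * d\<^sup>2 = u\<^sup>2 + e * u\<^sup>2 + d\<^sup>2 + d\<^sup>2 / e"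
    by (simp add: algebra_simps)
  show ?thesis using 1 2 3 by linarith
qed

lemma card_nb_le: "card (nb j) \<le> N"
  using card_mono[OF _ nb_sub, of j] by simp

lemma step_bound:
  assumes cab: "c k = (a,b)" and abS: "(a,b) \<in> S" and e: "e > 0"
  shows "Vf (st c (Suc k)) \<le> (1 + e) * Uf (st c k) a b
      + (1 + 1/e) * N * (\<Sum>j=1..N. (xnw c k (st c k) a b j - st c k (sp j j))\<^sup>2)"
proof -
  let ?s = "st c k"
  let ?d = "\<lambda>j. xnw c k ?s a b j - ?s (sp j j)"
  have "Vf (st c (Suc k)) = (\<Sum>j=1..N. \<Sum>i\<in>nb j. ((xbv ?s a b i j - ?s (sp j j)) - ?d j)\<^sup>2)"
    unfolding Vf_def
  proof (intro sum.cong refl)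
    fix j i assume j: "j \<in> {1..N}" and i: "i \<in> nb j"
    have i1: "i \<in> {1..N}" using i nb_sub by blast
    have ji: "j \<in> nbt i" using i nb_sym unfolding nbIt_def by auto
    have "i \<noteq> j" using i notin_nb by blast
    then show "(st c (Suc k) (sp i j) - st c (Suc k) (sp j j))\<^sup>2 = ((xbv ?s a b i j - ?s (sp j j)) - ?d j)\<^sup>2"
      using st_Suc_at[of c k a b, OF cab abS i1 ji] st_Suc_at[of c k a b, OF cab abS j self_nbt]
      by simp
  qed
  also have "\<dots> \<le> (\<Sum>j=1..N. \<Sum>i\<in>nb j. (1 + e) * (xbv ?s a b i j - ?s (sp j j))\<^sup>2 + (1 + 1/e) * (?d j)\<^sup>2)"
    by (intro sum_mono sq_ineq e)
  also have "\<dots> = (1 + e) * Uf ?s a b + (\<Sum>j=1..N. card (nb j) * ((1 + 1/e) * (?d j)\<^sup>2))"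
    unfolding Uf_def by (simp add: sum.distrib sum_distrib_left)
  also have "(\<Sum>j=1..N. card (nb j) * ((1 + 1/e) * (?d j)\<^sup>2)) \<le> (\<Sum>j=1..N. N * ((1 + 1/e) * (?d j)\<^sup>2))"
    using e card_nb_le by (intro sum_mono mult_right_mono) auto
  also have "\<dots> = (1 + 1/e) * N * (\<Sum>j=1..N. (?d j)\<^sup>2)"
    by (simp add: sum_distrib_left mult_ac)
  finally show ?thesis by simp
qed

lemma sum_change:
  fixes f g :: "nat \<Rightarrow> real"
  assumes "finite A" "B \<subseteq> A" "\<And>i. i \<in> A - B \<Longrightarrow> f i = g i"
  shows "(\<Sum>i\<in>A. f i) - (\<Sum>i\<in>A. g i) = (\<Sum>i\<in>B. f i) - (\<Sum>i\<in>B. g i)"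
proof -
  have "(\<Sum>i\<in>A. f i) = (\<Sum>i\<in>B. f i) + (\<Sum>i\<in>A - B. f i)"
    using assms by (metis add.commute sum.subset_diff)
  moreover have "(\<Sum>i\<in>A. g i) = (\<Sum>i\<in>B. g i) + (\<Sum>i\<in>A - B. g i)"
    using assms by (metis add.commute sum.subset_diff)
  moreover have "(\<Sum>i\<in>A - B. f i) = (\<Sum>i\<in>A - B. g i)"
    using assms(3) by (rule sum.cong[OF refl])
  ultimately show ?thesis by simp
qed

lemma dec_j:
  assumes abS: "(a,b) \<in> S" and j: "j \<in> {1..N}"
  shows "(\<Sum>i\<in>nb j. (s (sp i j) - s (sp j j))\<^sup>2) - (\<Sum>i\<in>nb j. (xbv s a b i j - s (sp j j))\<^sup>2)
     \<ge> (if j \<in> ind EI N a b then (s (sp a j) - s (sp b j))\<^sup>2 / 2 else 0)"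
proof (cases "j \<in> ind EI N a b")
  case False
  then have "\<And>i. xbv s a b i j = s (sp i j)" unfolding xbv_def by simp
  then show ?thesis using False by simp
next
  case True
  have ab: "a \<noteq> b" using S_props[OF abS] by auto
  have ajn: "a \<in> nbt j" "b \<in> nbt j" using True nbt_sym unfolding ind_def by auto
  let ?f = "\<lambda>i. (s (sp i j) - s (sp j j))\<^sup>2"
  let ?g = "\<lambda>i. (xbv s a b i j - s (sp j j))\<^sup>2"
  let ?B = "{a,b} \<inter> nb j"
  have eq: "(\<Sum>i\<in>nb j. ?f i) - (\<Sum>i\<in>nb j. ?g i) = (\<Sum>i\<in>?B. ?f i) - (\<Sum>i\<in>?B. ?g i)"
    by (rule sum_change) (auto simp: xbv_def)
  have ga: "xbv s a b a j = (s (sp a j) + s (sp b j)) / 2" "xbv s a b b j = (s (sp a j) + s (sp b j)) / 2"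
    using True unfolding xbv_def by auto
  let ?D = "(s (sp a j) - s (sp b j))\<^sup>2"
  have D0: "?D \<ge> 0" by simp
  have "(\<Sum>i\<in>?B. ?f i) - (\<Sum>i\<in>?B. ?g i) \<ge> ?D / 2"
  proof -
    consider "a \<noteq> j" "b \<noteq> j" | "a = j" | "b = j" by blast
    then show ?thesis
    proof cases
      case 1
      then have "?B = {a,b}" using ajn unfolding nbIt_def by auto
      then have "(\<Sum>i\<in>?B. ?f i) - (\<Sum>i\<in>?B. ?g i) = ?f a + ?f b - ?g a - ?g b" using ab by simp
      also have "\<dots> = ?D / 2"
        unfolding ga by (simp add: power2_eq_square field_simps)
      finally show ?thesis by simp
    next
      case 2
      then have "?B = {b}" using ajn ab notin_nb unfolding nbIt_def by auto
      then have "(\<Sum>i\<in>?B. ?f i) - (\<Sum>i\<in>?B. ?g i) = ?f b - ?g b" by simp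
      also have "\<dots> = 3 * ?D / 4"
        unfolding ga using 2 by (simp add: power2_eq_square field_simps)
      finally show ?thesis using D0 by linarith
    next
      case 3
      then have "?B = {a}" using ajn ab notin_nb unfolding nbIt_def by auto
      then have "(\<Sum>i\<in>?B. ?f i) - (\<Sum>i\<in>?B. ?g i) = ?f a - ?g a" by simp
      also have "\<dots> = 3 * ?D / 4"
        unfolding ga using 3 by (simp add: power2_eq_square field_simps)
      finally show ?thesis using D0 by linarith
    qed
  qed
  then show ?thesis using eq True by simp
qed

definition "Dsq (s::nat \<Rightarrow> real) x j = (if j \<in> ind EI N (fst x) (snd x) then (s (sp (fst x) j) - s (sp (snd x) j))\<^sup>2 else 0)"

lemma Dsq_nonneg: "Dsq s x j \<ge> 0"
  unfolding Dsq_def by simp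

lemma dec_total:
  assumes "x \<in> S"
  shows "Vf s - Uf s (fst x) (snd x) \<ge> (\<Sum>j=1..N. Dsq s x j) / 2"
proof -
  obtain a b where x: "x = (a,b)" by fastforce
  have "Vf s - Uf s a b = (\<Sum>j=1..N. (\<Sum>i\<in>nb j. (s (sp i j) - s (sp j j))\<^sup>2) - (\<Sum>i\<in>nb j. (xbv s a b i j - s (sp j j))\<^sup>2))"
    unfolding Vf_def Uf_def by (simp add: sum_subtractf)
  also have "\<dots> \<ge> (\<Sum>j=1..N. Dsq s x j / 2)"
  proof (rule sum_mono)
    fix j assume j: "j \<in> {1..N}"
    have "Dsq s x j / 2 = (if j \<in> ind EI N a b then (s (sp a j) - s (sp b j))\<^sup>2 / 2 else 0)"
      unfolding Dsq_def x by simp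
    then show "Dsq s x j / 2 \<le> (\<Sum>i\<in>nb j. (s (sp i j) - s (sp j j))\<^sup>2) - (\<Sum>i\<in>nb j. (xbv s a b i j - s (sp j j))\<^sup>2)"
      using dec_j[of a b j s] assms x j by simp
  qed
  finally show ?thesis using x by (simp add: sum_divide_distrib)
qed

end

locale gfull = gstate +
  assumes G_cont: "\<And>i. i \<in> {1..N} \<Longrightarrow> continuous_on (Om i \<times> Dom_other EI N Om i) (\<lambda>(x, y). G i x y)"
    and tri: "\<And>i j. EI i j \<Longrightarrow> EC i j \<or> (\<exists>k. EC i k \<and> EC k j)"
    and nbr: "\<And>i. i \<in> {1..N} \<Longrightarrow> \<exists>j. EC i j"
    and Npos: "N \<ge> 1"
begin

lemma dom_compact:
  assumes "i \<in> {1..N}"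
  shows "compact (Dom_other EI N Om i)"
proof -
  define T where "T j = (if j \<in> nb i then Om j else {0})" for j
  have eq: "Dom_other EI N Om i = PiE UNIV T"
    unfolding Dom_other_def T_def PiE_def Pi_def extensional_def by auto
  have "\<forall>j. compactin euclidean (T j)"
  proof
    fix j show "compactin euclidean (T j)"
    proof (cases "j \<in> nb i")
      case True
      then have "j \<in> {1..N}" using nb_sub by blast
      then show ?thesis using Om_compact True unfolding T_def by simp
    next
      case False
      then show ?thesis unfolding T_def by simp
    qed
  qed
  then have "compactin (product_topology (\<lambda>_. euclidean) UNIV) (PiE UNIV T)"
    by (subst compactin_PiE) auto
  then show ?thesis unfolding eq euclidean_product_topology by simp
qed

lemma G_bound_ex: "\<exists>L. \<forall>i\<in>{1..N}. \<forall>x\<in>Om i. \<forall>y\<in>Dom_other EI N Om i. \<bar>G i x y\<bar> \<le> L"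
proof -
  have "\<forall>i\<in>{1..N}. \<exists>L. \<forall>z\<in>Om i \<times> Dom_other EI N Om i. \<bar>(\<lambda>(x, y). G i x y) z\<bar> \<le> L"
  proof
    fix i assume i: "i \<in> {1..N}"
    have "compact ((\<lambda>(x, y). G i x y) ` (Om i \<times> Dom_other EI N Om i))"
      by (intro compact_continuous_image G_cont[OF i] compact_Times Om_compact[OF i] dom_compact[OF i])
    then have "bounded ((\<lambda>(x, y). G i x y) ` (Om i \<times> Dom_other EI N Om i))"
      by (rule compact_imp_bounded)
    then show "\<exists>L. \<forall>z\<in>Om i \<times> Dom_other EI N Om i. \<bar>(\<lambda>(x, y). G i x y) z\<bar> \<le> L"
      unfolding bounded_real by auto
  qed
  then obtain f where f: "\<forall>i\<in>{1..N}. \<forall>z\<in>Om i \<times> Dom_other EI N Om i. \<bar>(\<lambda>(x, y). G i x y) z\<bar> \<le> f i"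
    by metis
  show ?thesis
  proof (intro exI ballI)
    fix i x y assume i: "i \<in> {1..N}" and x: "x \<in> Om i" and y: "y \<in> Dom_other EI N Om i"
    have "\<bar>G i x y\<bar> \<le> f i" using f i x y by fastforce
    also have "f i \<le> \<bar>f i\<bar>" by simp
    also have "\<bar>f i\<bar> \<le> (\<Sum>i'=1..N. \<bar>f i'\<bar>)"
      using i by (intro member_le_sum) auto
    finally show "\<bar>G i x y\<bar> \<le> (\<Sum>i'=1..N. \<bar>f i'\<bar>)" .
  qed
qed

definition "LG = (SOME L. \<forall>i\<in>{1..N}. \<forall>x\<in>Om i. \<forall>y\<in>Dom_other EI N Om i. \<bar>G i x y\<bar> \<le> L)"

lemma G_bound: "i \<in> {1..N} \<Longrightarrow> x \<in> Om i \<Longrightarrow> y \<in> Dom_other EI N Om i \<Longrightarrow> \<bar>G i x y\<bar> \<le> LG"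
  using someI_ex[OF G_bound_ex] unfolding LG_def by blast

lemma xnw_move:
  assumes cab: "c k = (a,b)" and abS: "(a,b) \<in> S" and good: "\<forall>t<k. c t \<in> S" and j: "j \<in> {1..N}"
  shows "(xnw c k (st c k) a b j - st c k (sp j j))\<^sup>2 \<le> (if j = a \<or> j = b then (alpha c k j * LG)\<^sup>2 else 0)"
proof (cases "j = a \<or> j = b")
  case True
  let ?s = "st c k"
  have inv: "\<And>i l. i \<in> {1..N} \<Longrightarrow> l \<in> nbt i \<Longrightarrow> ?s (sp i l) \<in> Om l"
    using st_inv good by blast
  have zin: "?s (sp j j) \<in> Om j" using inv[OF j self_nbt] .
  have yin: "xh ?s a b j \<in> Dom_other EI N Om j" by (rule xh_dom[OF abS j inv])
  have gb: "\<bar>G j (?s (sp j j)) (xh ?s a b j)\<bar> \<le> LG" by (rule G_bound[OF j zin yin])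
  have "dist (closest_point (Om j) (?s (sp j j) - alpha c k j * G j (?s (sp j j)) (xh ?s a b j)))
             (closest_point (Om j) (?s (sp j j))) \<le> dist (?s (sp j j) - alpha c k j * G j (?s (sp j j)) (xh ?s a b j)) (?s (sp j j))"
    by (rule closest_point_lipschitz[OF Om_convex[OF j] closed_Om[OF j] Om_ne[OF j]])
  then have "\<bar>xnw c k ?s a b j - ?s (sp j j)\<bar> \<le> alpha c k j * \<bar>G j (?s (sp j j)) (xh ?s a b j)\<bar>"
    unfolding xnw_def using True closest_point_self[OF zin] alpha_nonneg[of c k j]
    by (simp add: dist_real_def abs_mult)
  also have "\<dots> \<le> alpha c k j * LG"
    using gb alpha_nonneg[of c k j] by (intro mult_left_mono) auto
  finally have "\<bar>xnw c k ?s a b j - ?s (sp j j)\<bar> \<le> alpha c k j * LG" .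
  then have "(xnw c k ?s a b j - ?s (sp j j))\<^sup>2 \<le> (alpha c k j * LG)\<^sup>2"
    by (metis abs_ge_zero abs_le_square_iff abs_of_nonneg order.trans)
  then show ?thesis using True by simp
next
  case False
  then show ?thesis unfolding xnw_def by simp
qed


definition "pw x = 1 / (real N * real (card {l. EC (fst x) l}))"

lemma finite_S: "finite S"
proof -
  have "S \<subseteq> {1..N} \<times> {1..N}" using S_props by force
  then show ?thesis by (rule finite_subset) auto
qed

lemma deg_sub: "{l. EC a l} \<subseteq> {1..N}"
  using EC_EI EI_rng by blast

lemma deg_bounds:
  assumes "a \<in> {1..N}"
  shows "1 \<le> card {l. EC a l} \<and> card {l. EC a l} \<le> N"
proof
  have fin: "finite {l. EC a l}" using deg_sub finite_subset by blast
  obtain j where "EC a j" using nbr[OF assms] by blast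
  then have "{l. EC a l} \<noteq> {}" by blast
  then show "1 \<le> card {l. EC a l}" using fin by (simp add: Suc_le_eq card_gt_0_iff)
  show "card {l. EC a l} \<le> N" using card_mono[OF _ deg_sub, of a] by simp
qed

lemma pw_nonneg: "pw x \<ge> 0"
  unfolding pw_def by simp

lemma pw_lb:
  assumes "x \<in> S"
  shows "pw x \<ge> 1 / (real N)\<^sup>2"
proof -
  have a: "fst x \<in> {1..N}" using S_props[OF assms] by blast
  have d: "1 \<le> real (card {l. EC (fst x) l})" "real (card {l. EC (fst x) l}) \<le> real N"
    using deg_bounds[OF a] by auto
  have N0: "real N > 0" using Npos by simp
  have "real N * real (card {l. EC (fst x) l}) \<le> (real N)\<^sup>2"
    using d N0 by (simp add: power2_eq_square)
  moreover have "real N * real (card {l. EC (fst x) l}) > 0" using d N0 by simp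
  ultimately show ?thesis unfolding pw_def by (simp add: frac_le)
qed

lemma S_Sigma: "S = Sigma {1..N} (\<lambda>i. {l. EC i l})"
  unfolding pairS_def by auto

lemma sum_pw: "(\<Sum>x\<in>S. pw x) = 1"
proof -
  have "(\<Sum>x\<in>S. pw x) = (\<Sum>i=1..N. \<Sum>l\<in>{l. EC i l}. pw (i,l))"
    unfolding S_Sigma by (subst sum.Sigma) (auto intro: finite_subset[OF deg_sub])
  also have "\<dots> = (\<Sum>i=1..N. 1 / real N)"
  proof (rule sum.cong[OF refl])
    fix i assume i: "i \<in> {1..N}"
    have "(\<Sum>l\<in>{l. EC i l}. pw (i,l)) = real (card {l. EC i l}) * (1 / (real N * real (card {l. EC i l})))"
      unfolding pw_def by simp
    also have "\<dots> = 1 / real N" using deg_bounds[OF i] by simp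
    finally show "(\<Sum>l\<in>{l. EC i l}. pw (i,l)) = 1 / real N" .
  qed
  also have "\<dots> = 1" using Npos by simp
  finally show ?thesis .
qed

lemma Dsq_le_E:
  assumes "x \<in> S"
  shows "Dsq s x j \<le> (\<Sum>y\<in>S. Dsq s y j)"
  by (rule member_le_sum[OF assms]) (auto simp: Dsq_nonneg finite_S)

lemma sq_tri:
  fixes x y z :: real
  shows "(x - z)\<^sup>2 \<le> 2 * (x - y)\<^sup>2 + 2 * (y - z)\<^sup>2"
proof -
  have "2 * (x - y)\<^sup>2 + 2 * (y - z)\<^sup>2 - (x - z)\<^sup>2 = ((x - y) - (y - z))\<^sup>2"
    by (simp add: power2_eq_square algebra_simps)
  moreover have "((x - y) - (y - z))\<^sup>2 \<ge> 0" by simp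
  ultimately show ?thesis by linarith
qed

lemma poinc_term:
  assumes j: "j \<in> {1..N}" and i: "i \<in> nb j"
  shows "(s (sp i j) - s (sp j j))\<^sup>2 \<le> 4 * (\<Sum>y\<in>S. Dsq s y j)"
proof -
  let ?E = "\<Sum>y\<in>S. Dsq s y j"
  have E0: "?E \<ge> 0" by (intro sum_nonneg Dsq_nonneg)
  have eij: "EI i j" using i nb_iff EI_sym by blast
  have i1: "i \<in> {1..N}" using EI_rng[OF eij] by blast
  from tri[OF eij] show ?thesis
  proof
    assume ec: "EC i j"
    have "(i,j) \<in> S" using ec i1 unfolding pairS_def by auto
    moreover have "j \<in> ind EI N i j" unfolding ind_def using eij by (auto simp: nbt_iff)
    ultimately have "(s (sp i j) - s (sp j j))\<^sup>2 \<le> ?E"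
      using Dsq_le_E[of "(i,j)" s j] unfolding Dsq_def by simp
    then show ?thesis using E0 by linarith
  next
    assume "\<exists>k. EC i k \<and> EC k j"
    then obtain k where k: "EC i k" "EC k j" by blast
    have ekj: "EI k j" using k EC_EI by blast
    have k1: "k \<in> {1..N}" using EI_rng[OF ekj] by blast
    have "(i,k) \<in> S" using k i1 unfolding pairS_def by auto
    moreover have "j \<in> ind EI N i k" unfolding ind_def using eij ekj by (auto simp: nbt_iff EI_sym)
    ultimately have 1: "(s (sp i j) - s (sp k j))\<^sup>2 \<le> ?E"
      using Dsq_le_E[of "(i,k)" s j] unfolding Dsq_def by simp
    have "(k,j) \<in> S" using k k1 unfolding pairS_def by auto
    moreover have "j \<in> ind EI N k j" unfolding ind_def using ekj by (auto simp: nbt_iff)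
    ultimately have 2: "(s (sp k j) - s (sp j j))\<^sup>2 \<le> ?E"
      using Dsq_le_E[of "(k,j)" s j] unfolding Dsq_def by simp
    have "(s (sp i j) - s (sp j j))\<^sup>2 \<le> 2 * (s (sp i j) - s (sp k j))\<^sup>2 + 2 * (s (sp k j) - s (sp j j))\<^sup>2"
      by (rule sq_tri)
    then show ?thesis using 1 2 by linarith
  qed
qed

lemma poincare: "Vf s \<le> 4 * real N * (\<Sum>x\<in>S. \<Sum>j=1..N. Dsq s x j)"
proof -
  have "Vf s \<le> (\<Sum>j=1..N. \<Sum>i\<in>nb j. 4 * (\<Sum>y\<in>S. Dsq s y j))"
    unfolding Vf_def by (intro sum_mono poinc_term) auto
  also have "\<dots> = (\<Sum>j=1..N. real (card (nb j)) * (4 * (\<Sum>y\<in>S. Dsq s y j)))"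
    by simp
  also have "\<dots> \<le> (\<Sum>j=1..N. real N * (4 * (\<Sum>y\<in>S. Dsq s y j)))"
    using card_nb_le by (intro sum_mono mult_right_mono) (auto intro!: sum_nonneg Dsq_nonneg)
  also have "\<dots> = 4 * real N * (\<Sum>j=1..N. \<Sum>y\<in>S. Dsq s y j)"
    by (simp add: sum_distrib_left mult_ac)
  also have "(\<Sum>j=1..N. \<Sum>y\<in>S. Dsq s y j) = (\<Sum>x\<in>S. \<Sum>j=1..N. Dsq s x j)"
    by (rule sum.swap)
  finally show ?thesis .
qed

definition "c0 = 1 / (8 * (real N)^3)"

lemma c0_pos: "c0 > 0" unfolding c0_def using Npos by simp

lemma c0_le: "c0 \<le> 1/8" unfolding c0_def using Npos
  by (simp add: divide_simps)

lemma exp_dec: "(\<Sum>x\<in>S. pw x * (Vf s - Uf s (fst x) (snd x))) \<ge> c0 * Vf s"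
proof -
  let ?T = "\<lambda>x. (\<Sum>j=1..N. Dsq s x j)"
  have N0: "real N > 0" using Npos by simp
  have "(\<Sum>x\<in>S. pw x * (Vf s - Uf s (fst x) (snd x))) \<ge> (\<Sum>x\<in>S. 1 / (real N)\<^sup>2 * (?T x / 2))"
  proof (rule sum_mono)
    fix x assume x: "x \<in> S"
    have T0: "?T x \<ge> 0" by (intro sum_nonneg Dsq_nonneg)
    have "1 / (real N)\<^sup>2 * (?T x / 2) \<le> pw x * (?T x / 2)"
      using pw_lb[OF x] T0 by (intro mult_right_mono) auto
    also have "\<dots> \<le> pw x * (Vf s - Uf s (fst x) (snd x))"
      using dec_total[OF x, of s] pw_nonneg[of x] by (intro mult_left_mono) auto
    finally show "1 / (real N)\<^sup>2 * (?T x / 2) \<le> pw x * (Vf s - Uf s (fst x) (snd x))" .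
  qed
  moreover have "(\<Sum>x\<in>S. 1 / (real N)\<^sup>2 * (?T x / 2)) = (\<Sum>x\<in>S. ?T x) / (2 * (real N)\<^sup>2)"
    by (simp add: sum_distrib_left sum_divide_distrib[symmetric] field_simps)
  moreover have "(\<Sum>x\<in>S. ?T x) / (2 * (real N)\<^sup>2) \<ge> c0 * Vf s"
  proof -
    have "Vf s / (4 * real N) \<le> (\<Sum>x\<in>S. ?T x)"
      using poincare[of s] N0 by (simp add: divide_simps mult_ac)
    then have "Vf s / (4 * real N) / (2 * (real N)\<^sup>2) \<le> (\<Sum>x\<in>S. ?T x) / (2 * (real N)\<^sup>2)"
      using N0 by (intro divide_right_mono) auto
    moreover have "Vf s / (4 * real N) / (2 * (real N)\<^sup>2) = c0 * Vf s"
      unfolding c0_def using N0 by (simp add: field_simps power2_eq_square power3_eq_cube)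
    ultimately show ?thesis by simp
  qed
  ultimately show ?thesis by linarith
qed


definition "Dec s x = Vf s - Uf s (fst x) (snd x)"

definition "Dl c k = (\<Sum>j=1..N. if j = fst (c k) \<or> j = snd (c k) then (alpha c k j)\<^sup>2 else 0)"

lemma Dl_nonneg: "Dl c k \<ge> 0"
  unfolding Dl_def by (intro sum_nonneg) auto

definition "KK = (1 + 1/c0) * real N * LG\<^sup>2"

lemma KK_nonneg: "KK \<ge> 0"
  unfolding KK_def using c0_pos by simp

lemma step_full:
  assumes "c k \<in> S" "\<forall>t<k. c t \<in> S"
  shows "Vf (st c (Suc k)) \<le> (1 + c0) * (Vf (st c k) - Dec (st c k) (c k)) + KK * Dl c k"
proof -
  obtain a b where cab: "c k = (a,b)" by fastforce
  have abS: "(a,b) \<in> S" using assms cab by simp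
  have "Vf (st c (Suc k)) \<le> (1 + c0) * Uf (st c k) a b
      + (1 + 1/c0) * N * (\<Sum>j=1..N. (xnw c k (st c k) a b j - st c k (sp j j))\<^sup>2)"
    by (rule step_bound[of c k a b c0, OF cab abS c0_pos])
  also have "(\<Sum>j=1..N. (xnw c k (st c k) a b j - st c k (sp j j))\<^sup>2)
      \<le> (\<Sum>j=1..N. if j = a \<or> j = b then (alpha c k j * LG)\<^sup>2 else 0)"
    by (intro sum_mono xnw_move[of c k a b, OF cab abS assms(2)]) auto
  also have "(\<Sum>j=1..N. if j = a \<or> j = b then (alpha c k j * LG)\<^sup>2 else 0) = LG\<^sup>2 * Dl c k"
    unfolding Dl_def cab by (simp add: sum_distrib_left power_mult_distrib if_distrib mult_ac cong: if_cong)
  finally have "Vf (st c (Suc k)) \<le> (1 + c0) * Uf (st c k) a b + (1 + 1/c0) * N * (LG\<^sup>2 * Dl c k)"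
    using c0_pos by (simp add: mult_left_mono)
  then show ?thesis unfolding Dec_def KK_def cab by (simp add: mult_ac)
qed

lemma alpha_prefix:
  assumes "\<forall>t\<le>k. c t = c' t"
  shows "alpha c k i = alpha c' k i"
proof -
  have "{t \<in> {..k}. i = fst (c t) \<or> i = snd (c t)} = {t \<in> {..k}. i = fst (c' t) \<or> i = snd (c' t)}"
    using assms by auto
  then show ?thesis unfolding alpha_def nu_def by simp
qed

lemma st_prefix:
  assumes "\<forall>t<k. c t = c' t"
  shows "st c k = st c' k"
  using assms
proof (induction k)
  case 0
  then show ?case by simp
next
  case (Suc k)
  have "st c k = st c' k" using Suc by simp
  moreover have "c k = c' k" using Suc.prems by simp
  moreover have "alpha c k = alpha c' k"
    using Suc.prems by (intro ext alpha_prefix) auto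
  ultimately show ?case by (simp only: gossip_state.simps Let_def)
qed

definition "upd c i t = (i = fst (c t) \<or> i = snd (c t))"
definition "cnt c i n = card {t. t < n \<and> upd c i t}"

lemma cnt_Suc: "cnt c i (Suc n) = cnt c i n + (if upd c i n then 1 else 0)"
proof -
  have "{t. t < Suc n \<and> upd c i t} = {t. t < n \<and> upd c i t} \<union> (if upd c i n then {n} else {})"
    by (auto simp: less_Suc_eq)
  then show ?thesis unfolding cnt_def by auto
qed

lemma alpha_cnt: "alpha c k i = 1 / real (cnt c i (Suc k))"
proof -
  have "{t \<in> {..k}. i = fst (c t) \<or> i = snd (c t)} = {t. t < Suc k \<and> upd c i t}"
    unfolding upd_def by auto
  then show ?thesis unfolding alpha_def nu_def cnt_def by simp
qed

lemma count_sum: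
  fixes g :: "nat \<Rightarrow> real"
  shows "(\<Sum>k<n. if upd c i k then g (cnt c i (Suc k)) else 0) = (\<Sum>m=1..cnt c i n. g m)"
proof (induction n)
  case 0
  then show ?case by (simp add: cnt_def)
next
  case (Suc n)
  show ?case
  proof (cases "upd c i n")
    case True
    then have "cnt c i (Suc n) = Suc (cnt c i n)" using cnt_Suc[of c i n] by simp
    then show ?thesis using Suc True by simp
  next
    case False
    then have "cnt c i (Suc n) = cnt c i n" using cnt_Suc[of c i n] by simp
    then show ?thesis using Suc False by simp
  qed
qed

lemma inv_sq_sum: "(\<Sum>m=1..M. 1 / (real m)\<^sup>2) \<le> 2 - 1 / real (max M 1)"
proof (induction M)
  case 0
  then show ?case by simp
next
  case (Suc M)
  show ?case
  proof (cases "M = 0")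
    case True
    then show ?thesis by simp
  next
    case False
    then have M1: "real M \<ge> 1" by simp
    have "(\<Sum>m=1..Suc M. 1 / (real m)\<^sup>2) = (\<Sum>m=1..M. 1 / (real m)\<^sup>2) + 1 / (real (Suc M))\<^sup>2"
      by simp
    also have "\<dots> \<le> 2 - 1 / real M + 1 / (real (Suc M))\<^sup>2"
      using Suc False by simp
    also have "\<dots> \<le> 2 - 1 / real (Suc M)"
    proof -
      have e1: "1 / real M - 1 / real (Suc M) = 1 / (real M * (real M + 1))"
        using M1 by (simp add: field_simps)
      have "real M * (real M + 1) \<le> (real M + 1) * (real M + 1)"
        by (rule mult_right_mono) auto
      then have "1 / (real M + 1)\<^sup>2 \<le> 1 / (real M * (real M + 1))"
        using M1 by (intro divide_left_mono) (auto simp: power2_eq_square)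
      then have "1 / (real (Suc M))\<^sup>2 \<le> 1 / real M - 1 / real (Suc M)"
        unfolding e1 by (simp add: add.commute)
      then show ?thesis by simp
    qed
    finally show ?thesis by simp
  qed
qed

lemma inv_sq_sum2: "(\<Sum>m=1..M. 1 / (real m)\<^sup>2) \<le> 2"
proof -
  have "1 / real (max M 1) \<ge> 0" by simp
  then show ?thesis using inv_sq_sum[of M] by linarith
qed

lemma Dl_sum: "(\<Sum>k<n. Dl c k) \<le> 2 * real N"
proof -
  have "(\<Sum>k<n. Dl c k) = (\<Sum>j=1..N. \<Sum>k<n. if upd c j k then (1 / real (cnt c j (Suc k)))\<^sup>2 else 0)"
    unfolding Dl_def alpha_cnt upd_def by (rule sum.swap)
  also have "\<dots> = (\<Sum>j=1..N. \<Sum>m=1..cnt c j n. 1 / (real m)\<^sup>2)"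
    by (subst count_sum) (simp add: power_divide)
  also have "\<dots> \<le> (\<Sum>j=1..N. 2)"
    by (intro sum_mono inv_sq_sum2)
  finally show ?thesis by simp
qed

lemma alpha_next_sum: "(\<Sum>k<n. if upd c i (Suc k) then (alpha c k i)\<^sup>2 else 0) \<le> 8"
proof -
  define g where "g m = 1 / (real m - 1)\<^sup>2" for m :: nat
  have g0: "g m \<ge> 0" for m unfolding g_def by simp
  have gle: "g m \<le> 4 * (1 / (real m)\<^sup>2)" if m1: "m \<ge> 1" for m
  proof (cases "m \<ge> 2")
    case True
    then have m: "real m \<ge> 2" by simp
    then have "real m \<le> 2 * (real m - 1)" by simp
    then have "(real m)\<^sup>2 \<le> (2 * (real m - 1))\<^sup>2"
      by (rule power_mono) simp
    moreover have "(2 * (real m - 1))\<^sup>2 = 4 * (real m - 1)\<^sup>2"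
      by (simp add: power2_eq_square algebra_simps)
    ultimately have "(real m)\<^sup>2 \<le> 4 * (real m - 1)\<^sup>2"
      by simp
    moreover have "(real m - 1)\<^sup>2 > 0" using m by simp
    ultimately show ?thesis unfolding g_def using m by (simp add: field_simps)
  next
    case False
    then have "m = 1" using m1 by auto
    then show ?thesis unfolding g_def by auto
  qed
  have "(\<Sum>k<n. if upd c i (Suc k) then (alpha c k i)\<^sup>2 else 0)
      = (\<Sum>k<n. if upd c i (Suc k) then g (cnt c i (Suc (Suc k))) else 0)"
  proof (intro sum.cong refl)
    fix k
    show "(if upd c i (Suc k) then (alpha c k i)\<^sup>2 else 0) = (if upd c i (Suc k) then g (cnt c i (Suc (Suc k))) else 0)"
      unfolding alpha_cnt g_def using cnt_Suc[of c i "Suc k"] by (simp add: power_divide)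
  qed
  also have "\<dots> \<le> (if upd c i 0 then g (cnt c i (Suc 0)) else 0) + (\<Sum>k<n. if upd c i (Suc k) then g (cnt c i (Suc (Suc k))) else 0)"
    using g0 by simp
  also have "\<dots> = (\<Sum>k<Suc n. if upd c i k then g (cnt c i (Suc k)) else 0)"
    by (subst sum.lessThan_Suc_shift) simp
  also have "\<dots> = (\<Sum>m=1..cnt c i (Suc n). g m)"
    by (rule count_sum)
  also have "\<dots> \<le> (\<Sum>m=1..cnt c i (Suc n). 4 * (1 / (real m)\<^sup>2))"
    by (intro sum_mono gle) auto
  also have "\<dots> = 4 * (\<Sum>m=1..cnt c i (Suc n). 1 / (real m)\<^sup>2)"
    by (rule sum_distrib_left[symmetric])
  also have "\<dots> \<le> 4 * 2"
    using inv_sq_sum2 by (intro mult_left_mono) auto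
  finally show ?thesis by simp
qed

end


lemma prod_list_nth: "prod_list (map f l) = (\<Prod>t<length l. f (l ! t))"
proof (induction l)
  case Nil
  then show ?case by simp
next
  case (Cons a l)
  then show ?case by (simp add: prod.lessThan_Suc_shift del: prod.lessThan_Suc)
qed

locale gprob = gfull N EI Om G x0 EC + prob_space M
  for N EI Om G x0 EC and M :: "'a measure" +
  fixes C :: "nat \<Rightarrow> 'a \<Rightarrow> nat \<times> nat"
  assumes C_indep: "indep_vars (\<lambda>_. count_space UNIV) C UNIV"
    and C_distr: "\<And>k x. prob {\<omega> \<in> space M. C k \<omega> = x} =
        (if x \<in> pairS N EC then 1 / (real N * real (card {l. EC (fst x) l})) else 0)"
begin

lemma P_C: "prob {\<omega> \<in> space M. C k \<omega> = x} = (if x \<in> S then pw x else 0)"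
  using C_distr unfolding pw_def by simp

lemma C_meas: "C k \<in> measurable M (count_space UNIV)"
  using C_indep unfolding indep_vars_def2 by auto

lemma ev_C: "{\<omega> \<in> space M. C k \<omega> = x} \<in> events"
proof -
  have "C k -` {x} \<inter> space M \<in> events" using measurable_sets[OF C_meas] by simp
  moreover have "{\<omega> \<in> space M. C k \<omega> = x} = C k -` {x} \<inter> space M" by auto
  ultimately show ?thesis by simp
qed

lemma AE_CS: "AE \<omega> in M. \<forall>t. C t \<omega> \<in> S"
proof (subst AE_all_countable, intro allI)
  fix t
  have eq: "{\<omega> \<in> space M. C t \<omega> \<in> S} = (\<Union>x\<in>S. {\<omega> \<in> space M. C t \<omega> = x})" by auto
  have "prob (\<Union>x\<in>S. {\<omega> \<in> space M. C t \<omega> = x}) = (\<Sum>x\<in>S. prob {\<omega> \<in> space M. C t \<omega> = x})"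
    by (rule measure_finite_Union) (auto simp: finite_S ev_C disjoint_family_on_def)
  also have "\<dots> = (\<Sum>x\<in>S. pw x)" by (simp add: P_C)
  also have "\<dots> = 1" by (rule sum_pw)
  finally have "prob {\<omega> \<in> space M. C t \<omega> \<in> S} = 1" using eq by simp
  then have "AE \<omega> in M. \<omega> \<in> {\<omega> \<in> space M. C t \<omega> \<in> S}" by (rule AE_prob_1)
  then show "AE \<omega> in M. C t \<omega> \<in> S" by eventually_elim auto
qed

definition "H k \<omega> = map (\<lambda>t. C t \<omega>) [0..<k]"
definition "Lk k = {l. set l \<subseteq> S \<and> length l = k}"
definition "w l = prod_list (map pw l)"

lemma finite_Lk: "finite (Lk k)"
  unfolding Lk_def by (rule finite_lists_length_eq[OF finite_S])

lemma H_eq_iff: "H k \<omega> = l \<longleftrightarrow> length l = k \<and> (\<forall>t<k. C t \<omega> = l ! t)"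
  unfolding H_def by (auto simp: list_eq_iff_nth_eq)

lemma H_nth: "t < k \<Longrightarrow> H k \<omega> ! t = C t \<omega>"
  unfolding H_def by simp

lemma H_set:
  assumes "length l = k" "k > 0"
  shows "{\<omega> \<in> space M. H k \<omega> = l} = (\<Inter>t\<in>{..<k}. {\<omega> \<in> space M. C t \<omega> = l ! t})"
  using assms by (auto simp: H_eq_iff)

lemma ev_H: "{\<omega> \<in> space M. H k \<omega> = l} \<in> events"
proof (cases "length l = k")
  case True
  show ?thesis
  proof (cases "k = 0")
    case True
    then have "{\<omega> \<in> space M. H k \<omega> = l} = space M" using \<open>length l = k\<close> by (auto simp: H_eq_iff)
    then show ?thesis by simp
  next
    case False
    then have "k > 0" by simp
    then show ?thesis unfolding H_set[OF \<open>length l = k\<close> \<open>k > 0\<close>]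
      by (intro sets.finite_INT ev_C) auto
  qed
next
  case False
  then have e: "{\<omega> \<in> space M. H k \<omega> = l} = {}" by (auto simp: H_eq_iff)
  show ?thesis unfolding e by simp
qed

lemma prob_H:
  assumes "l \<in> Lk k"
  shows "prob {\<omega> \<in> space M. H k \<omega> = l} = w l"
proof (cases "k = 0")
  case True
  then have "l = []" using assms unfolding Lk_def by auto
  then have "{\<omega> \<in> space M. H k \<omega> = l} = space M" using True by (auto simp: H_eq_iff)
  then show ?thesis using \<open>l = []\<close> by (simp add: w_def prob_space)
next
  case False
  have len: "length l = k" and lS: "set l \<subseteq> S" using assms unfolding Lk_def by auto
  have ind: "indep_sets (\<lambda>i. {C i -` A \<inter> space M | A. A \<in> sets (count_space UNIV)}) UNIV"
    using C_indep unfolding indep_vars_def2 by auto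
  have "prob (\<Inter>t\<in>{..<k}. {\<omega> \<in> space M. C t \<omega> = l ! t}) = (\<Prod>t\<in>{..<k}. prob {\<omega> \<in> space M. C t \<omega> = l ! t})"
  proof (rule indep_setsD[OF ind])
    show "\<forall>j\<in>{..<k}. {\<omega> \<in> space M. C j \<omega> = l ! j} \<in> {C j -` A \<inter> space M | A. A \<in> sets (count_space UNIV)}"
    proof
      fix j assume "j \<in> {..<k}"
      have "{\<omega> \<in> space M. C j \<omega> = l ! j} = C j -` {l ! j} \<inter> space M" by auto
      then show "{\<omega> \<in> space M. C j \<omega> = l ! j} \<in> {C j -` A \<inter> space M | A. A \<in> sets (count_space UNIV)}"
        by (intro CollectI exI[of _ "{l ! j}"]) simp
    qed
  qed (use False in \<open>simp_all add: lessThan_empty_iff\<close>)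
  also have "\<dots> = (\<Prod>t\<in>{..<k}. pw (l ! t))"
  proof (rule prod.cong[OF refl])
    fix t assume "t \<in> {..<k}"
    then have "l ! t \<in> S" using lS len by (auto intro: nth_mem)
    then show "prob {\<omega> \<in> space M. C t \<omega> = l ! t} = pw (l ! t)" by (simp add: P_C)
  qed
  also have "\<dots> = w l" unfolding w_def prod_list_nth len ..
  moreover have "{\<omega> \<in> space M. H k \<omega> = l} = (\<Inter>t\<in>{..<k}. {\<omega> \<in> space M. C t \<omega> = l ! t})"
    using False by (intro H_set[OF len]) simp
  ultimately show ?thesis by simp
qed

lemma meas_H: "H k \<in> measurable M (count_space UNIV)"
proof -
  have eq: "\<And>l. H k -` {l} \<inter> space M = {\<omega> \<in> space M. H k \<omega> = l}" by auto
  show ?thesis unfolding measurable_count_space_eq2_countable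
  proof (intro conjI ballI)
    show "H k \<in> space M \<rightarrow> UNIV" by simp
    fix l :: "(nat \<times> nat) list"
    show "H k -` {l} \<inter> space M \<in> sets M" unfolding eq by (rule ev_H)
  qed
qed

lemma expect_H:
  fixes F :: "(nat \<times> nat) list \<Rightarrow> real"
  shows "integrable M (\<lambda>\<omega>. F (H k \<omega>)) \<and> expectation (\<lambda>\<omega>. F (H k \<omega>)) = (\<Sum>l\<in>Lk k. F l * w l)"
proof -
  let ?R = "\<lambda>\<omega>. \<Sum>l\<in>Lk k. F l * indicator {\<omega> \<in> space M. H k \<omega> = l} \<omega>"
  have AE: "AE \<omega> in M. F (H k \<omega>) = ?R \<omega>"
    using AE_CS AE_space
  proof eventually_elim
    case (elim \<omega>)
    have HL: "H k \<omega> \<in> Lk k" unfolding Lk_def H_def using elim by auto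
    have "?R \<omega> = (\<Sum>l\<in>Lk k. if H k \<omega> = l then F l else 0)"
      using elim by (intro sum.cong refl) (auto simp: indicator_def)
    also have "\<dots> = F (H k \<omega>)" using HL finite_Lk by simp
    finally show ?case by simp
  qed
  have intR: "integrable M ?R"
    using ev_H by (intro Bochner_Integration.integrable_sum Bochner_Integration.integrable_mult_right integrable_real_indicator) (auto simp: less_top[symmetric])
  have mF: "(\<lambda>\<omega>. F (H k \<omega>)) \<in> borel_measurable M"
    by (rule measurable_compose[OF meas_H]) simp
  have AE': "AE \<omega> in M. ?R \<omega> = F (H k \<omega>)" using AE by (rule AE_mp) simp
  have "integrable M (\<lambda>\<omega>. F (H k \<omega>))"
    by (rule integrable_cong_AE_imp[OF intR mF AE'])
  moreover have "expectation (\<lambda>\<omega>. F (H k \<omega>)) = expectation ?R"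
    by (rule integral_cong_AE[OF mF borel_measurable_integrable[OF intR] AE])
  moreover have "expectation ?R = (\<Sum>l\<in>Lk k. F l * w l)"
  proof -
    have "expectation ?R = (\<Sum>l\<in>Lk k. expectation (\<lambda>\<omega>. F l * indicator {\<omega> \<in> space M. H k \<omega> = l} \<omega>))"
      using ev_H by (intro Bochner_Integration.integral_sum Bochner_Integration.integrable_mult_right integrable_real_indicator) (auto simp: less_top[symmetric])
    also have "\<dots> = (\<Sum>l\<in>Lk k. F l * w l)"
    proof (rule sum.cong[OF refl])
      fix l assume "l \<in> Lk k"
      then show "expectation (\<lambda>\<omega>. F l * indicator {\<omega> \<in> space M. H k \<omega> = l} \<omega>) = F l * w l"
        using prob_H[of l k] by (simp add: Int_absorb2)
    qed
    finally show ?thesis .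
  qed
  ultimately show ?thesis by simp
qed

lemma prefix_expect:
  fixes \<Psi> :: "(nat \<Rightarrow> nat \<times> nat) \<Rightarrow> real"
  assumes pre: "\<And>c c'. (\<forall>t<k. c t = c' t) \<Longrightarrow> \<Psi> c = \<Psi> c'"
  shows "integrable M (\<lambda>\<omega>. \<Psi> (\<lambda>t. C t \<omega>)) \<and>
    expectation (\<lambda>\<omega>. \<Psi> (\<lambda>t. C t \<omega>)) = (\<Sum>l\<in>Lk k. \<Psi> (\<lambda>t. l ! t) * w l)"
proof -
  have eq: "\<Psi> (\<lambda>t. C t \<omega>) = \<Psi> (\<lambda>t. H k \<omega> ! t)" for \<omega>
    by (rule pre) (simp add: H_nth)
  show ?thesis unfolding eq using expect_H[of "\<lambda>l. \<Psi> (\<lambda>t. l ! t)" k] by simp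
qed

lemma Lk_Suc: "Lk (Suc k) = (\<lambda>(l,x). l @ [x]) ` (Lk k \<times> S)"
proof
  show "(\<lambda>(l,x). l @ [x]) ` (Lk k \<times> S) \<subseteq> Lk (Suc k)"
    unfolding Lk_def by auto
  show "Lk (Suc k) \<subseteq> (\<lambda>(l,x). l @ [x]) ` (Lk k \<times> S)"
  proof
    fix l assume l: "l \<in> Lk (Suc k)"
    then have "l \<noteq> []" unfolding Lk_def by auto
    then obtain l' x where lx: "l = l' @ [x]" by (metis rev_exhaust)
    then have "l' \<in> Lk k" "x \<in> S" using l unfolding Lk_def by auto
    then show "l \<in> (\<lambda>(l,x). l @ [x]) ` (Lk k \<times> S)" using lx by force
  qed
qed

lemma inj_snoc: "inj_on (\<lambda>(l,x). l @ [x]) (Lk k \<times> S)"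
  unfolding inj_on_def by auto

lemma one_step:
  fixes \<Phi> :: "(nat \<Rightarrow> nat \<times> nat) \<Rightarrow> nat \<times> nat \<Rightarrow> real"
  assumes pre: "\<And>c c' x. (\<forall>t<k. c t = c' t) \<Longrightarrow> \<Phi> c x = \<Phi> c' x"
  shows "integrable M (\<lambda>\<omega>. \<Phi> (\<lambda>t. C t \<omega>) (C k \<omega>))"
    "integrable M (\<lambda>\<omega>. \<Sum>x\<in>S. pw x * \<Phi> (\<lambda>t. C t \<omega>) x)"
    "expectation (\<lambda>\<omega>. \<Phi> (\<lambda>t. C t \<omega>) (C k \<omega>)) = expectation (\<lambda>\<omega>. \<Sum>x\<in>S. pw x * \<Phi> (\<lambda>t. C t \<omega>) x)"
proof -
  have pre1: "\<And>c c'. (\<forall>t<Suc k. c t = c' t) \<Longrightarrow> \<Phi> c (c k) = \<Phi> c' (c' k)"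
    using pre by simp
  have pre2: "(\<Sum>x\<in>S. pw x * \<Phi> c x) = (\<Sum>x\<in>S. pw x * \<Phi> c' x)" if "\<forall>t<k. c t = c' t" for c c'
    using pre[OF that] by simp
  note E1 = prefix_expect[of "Suc k" "\<lambda>c. \<Phi> c (c k)", OF pre1]
  note E2 = prefix_expect[of k "\<lambda>c. \<Sum>x\<in>S. pw x * \<Phi> c x", OF pre2]
  show "integrable M (\<lambda>\<omega>. \<Phi> (\<lambda>t. C t \<omega>) (C k \<omega>))" using E1 by simp
  show "integrable M (\<lambda>\<omega>. \<Sum>x\<in>S. pw x * \<Phi> (\<lambda>t. C t \<omega>) x)" using E2 by simp
  have "(\<Sum>l\<in>Lk (Suc k). \<Phi> (\<lambda>t. l ! t) (l ! k) * w l)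
      = (\<Sum>(l,x)\<in>Lk k \<times> S. \<Phi> (\<lambda>t. (l @ [x]) ! t) ((l @ [x]) ! k) * w (l @ [x]))"
    unfolding Lk_Suc by (subst sum.reindex[OF inj_snoc]) (simp add: case_prod_unfold)
  also have "\<dots> = (\<Sum>(l,x)\<in>Lk k \<times> S. pw x * \<Phi> (\<lambda>t. l ! t) x * w l)"
  proof (rule sum.cong[OF refl], clarify)
    fix l x assume l: "l \<in> Lk k" and x: "x \<in> S"
    have len: "length l = k" using l unfolding Lk_def by auto
    have "\<Phi> (\<lambda>t. (l @ [x]) ! t) x = \<Phi> (\<lambda>t. l ! t) x"
      by (rule pre) (simp add: len nth_append)
    moreover have "(l @ [x]) ! k = x" using len[symmetric] by simp
    moreover have "w (l @ [x]) = w l * pw x" unfolding w_def by simp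
    ultimately show "\<Phi> (\<lambda>t. (l @ [x]) ! t) ((l @ [x]) ! k) * w (l @ [x]) = pw x * \<Phi> (\<lambda>t. l ! t) x * w l"
      by simp
  qed
  also have "\<dots> = (\<Sum>l\<in>Lk k. (\<Sum>x\<in>S. pw x * \<Phi> (\<lambda>t. l ! t) x) * w l)"
    by (simp add: sum.cartesian_product[symmetric] sum_distrib_right)
  finally show "expectation (\<lambda>\<omega>. \<Phi> (\<lambda>t. C t \<omega>) (C k \<omega>)) = expectation (\<lambda>\<omega>. \<Sum>x\<in>S. pw x * \<Phi> (\<lambda>t. C t \<omega>) x)"
    using E1 E2 by simp
qed


lemma AE_summable:
  fixes f :: "nat \<Rightarrow> 'a \<Rightarrow> real"
  assumes int: "\<And>k. integrable M (f k)" and nn: "\<And>k \<omega>. f k \<omega> \<ge> 0"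
    and bnd: "\<And>n. (\<Sum>k<n. expectation (f k)) \<le> B"
  shows "AE \<omega> in M. summable (\<lambda>k. f k \<omega>)"
proof -
  have Enn: "expectation (f k) \<ge> 0" for k using nn by simp
  have "summable (\<lambda>k. expectation (f k))"
  proof (rule bounded_imp_summable[OF Enn])
    fix n
    have "(\<Sum>k\<le>n. expectation (f k)) = (\<Sum>k<Suc n. expectation (f k))"
      by (simp add: lessThan_Suc_atMost)
    then show "(\<Sum>k\<le>n. expectation (f k)) \<le> B" using bnd[of "Suc n"] by simp
  qed
  then have ntop: "(\<Sum>k. ennreal (expectation (f k))) \<noteq> \<top>"
    using Enn by (intro ennreal_suminf_neq_top) auto
  have meas: "\<And>k. f k \<in> borel_measurable M" using int by auto
  have "(\<integral>\<^sup>+ \<omega>. (\<Sum>k. ennreal (f k \<omega>)) \<partial>M) = (\<Sum>k. \<integral>\<^sup>+ \<omega>. ennreal (f k \<omega>) \<partial>M)"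
    using meas by (intro nn_integral_suminf) auto
  also have "\<dots> = (\<Sum>k. ennreal (expectation (f k)))"
    using int nn by (subst nn_integral_eq_integral) auto
  finally have "(\<integral>\<^sup>+ \<omega>. (\<Sum>k. ennreal (f k \<omega>)) \<partial>M) \<noteq> \<infinity>" using ntop by simp
  then have "AE \<omega> in M. (\<Sum>k. ennreal (f k \<omega>)) \<noteq> \<infinity>"
    using meas by (intro nn_integral_noteq_infinite) auto
  then show ?thesis
    by eventually_elim (rule summable_suminf_not_top[OF nn], simp)
qed

abbreviation "cw \<omega> \<equiv> (\<lambda>t. C t \<omega>)"

lemma Dl_prefix:
  assumes "\<forall>t<Suc k. c t = c' t"
  shows "Dl c k = Dl c' k"
proof -
  have a: "alpha c k = alpha c' k" using assms by (intro ext alpha_prefix) auto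
  have b: "c k = c' k" using assms by simp
  show ?thesis unfolding Dl_def by (simp only: a b)
qed

lemma V_int: "integrable M (\<lambda>\<omega>. Vf (st (cw \<omega>) k))"
  using prefix_expect[of k "\<lambda>c. Vf (st c k)"] st_prefix by metis

lemma Dl_int: "integrable M (\<lambda>\<omega>. Dl (cw \<omega>) k)"
  using prefix_expect[of "Suc k" "\<lambda>c. Dl c k"] Dl_prefix by metis

definition "EV k = expectation (\<lambda>\<omega>. Vf (st (cw \<omega>) k))"
definition "ED k = expectation (\<lambda>\<omega>. Dl (cw \<omega>) k)"

lemma EV_nonneg: "EV k \<ge> 0"
  unfolding EV_def using Vf_nonneg by simp

lemma EV0: "EV 0 = Vf x0"
  unfolding EV_def by (simp add: prob_space)

lemma sumED: "(\<Sum>k<n. ED k) \<le> 2 * real N"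
proof -
  have "(\<Sum>k<n. ED k) = expectation (\<lambda>\<omega>. \<Sum>k<n. Dl (cw \<omega>) k)"
    unfolding ED_def using Dl_int by (simp add: Bochner_Integration.integral_sum)
  also have "\<dots> \<le> expectation (\<lambda>\<omega>. 2 * real N)"
    using Dl_int Dl_sum by (intro integral_mono) auto
  also have "\<dots> = 2 * real N" by (simp add: prob_space)
  finally show ?thesis .
qed

lemma rec:
  "EV (Suc k) \<le> (1 - c0\<^sup>2) * EV k + KK * ED k"
proof -
  have pre: "\<And>c c' x. (\<forall>t<k. c t = c' t) \<Longrightarrow> Dec (st c k) x = Dec (st c' k) x"
    using st_prefix by metis
  note OS = one_step[of k "\<lambda>c x. Dec (st c k) x", OF pre]
  let ?D = "\<lambda>\<omega>. Dec (st (cw \<omega>) k) (C k \<omega>)"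
  have ED: "expectation ?D \<ge> c0 * EV k"
  proof -
    have "expectation ?D = expectation (\<lambda>\<omega>. \<Sum>x\<in>S. pw x * Dec (st (cw \<omega>) k) x)"
      by (rule OS(3))
    also have "\<dots> \<ge> expectation (\<lambda>\<omega>. c0 * Vf (st (cw \<omega>) k))"
      using OS(2) V_int exp_dec unfolding Dec_def by (intro integral_mono) auto
    finally show ?thesis unfolding EV_def by simp
  qed
  have AE: "AE \<omega> in M. Vf (st (cw \<omega>) (Suc k)) \<le> (1 + c0) * (Vf (st (cw \<omega>) k) - ?D \<omega>) + KK * Dl (cw \<omega>) k"
    using AE_CS by eventually_elim (rule step_full, auto)
  have "EV (Suc k) \<le> expectation (\<lambda>\<omega>. (1 + c0) * (Vf (st (cw \<omega>) k) - ?D \<omega>) + KK * Dl (cw \<omega>) k)"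
    unfolding EV_def
    by (rule integral_mono_AE[OF V_int _ AE]) (use OS(1) V_int Dl_int in auto)
  also have "\<dots> = (1 + c0) * (EV k - expectation ?D) + KK * ED k"
    unfolding EV_def ED_def using OS(1) V_int Dl_int by simp
  also have "\<dots> \<le> (1 + c0) * (EV k - c0 * EV k) + KK * ED k"
    using ED c0_pos by (intro add_right_mono mult_left_mono) auto
  also have "\<dots> = (1 - c0\<^sup>2) * EV k + KK * ED k"
    by (simp add: power2_eq_square algebra_simps)
  finally show ?thesis .
qed

lemma sumEV: "(\<Sum>k<n. EV k) \<le> (Vf x0 + KK * (2 * real N)) / c0\<^sup>2"
proof -
  have claim: "c0\<^sup>2 * (\<Sum>k<n. EV k) + EV n \<le> EV 0 + KK * (\<Sum>k<n. ED k)" for n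
  proof (induction n)
    case 0
    then show ?case by simp
  next
    case (Suc n)
    have "c0\<^sup>2 * (\<Sum>k<Suc n. EV k) + EV (Suc n) \<le> c0\<^sup>2 * (\<Sum>k<n. EV k) + c0\<^sup>2 * EV n + ((1 - c0\<^sup>2) * EV n + KK * ED n)"
      using rec[of n] by (simp add: algebra_simps)
    also have "\<dots> = c0\<^sup>2 * (\<Sum>k<n. EV k) + EV n + KK * ED n"
      by (simp add: algebra_simps)
    also have "\<dots> \<le> EV 0 + KK * (\<Sum>k<n. ED k) + KK * ED n"
      using Suc by simp
    finally show ?case by (simp add: algebra_simps)
  qed
  have "c0\<^sup>2 * (\<Sum>k<n. EV k) \<le> Vf x0 + KK * (2 * real N)"
    using claim[of n] EV_nonneg[of n] EV0 sumED[of n] KK_nonneg mult_left_mono[OF sumED[of n] KK_nonneg]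
    by linarith
  then show ?thesis using c0_pos by (simp add: field_simps)
qed

lemma AE_V: "AE \<omega> in M. summable (\<lambda>k. Vf (st (cw \<omega>) k))"
  by (rule AE_summable[OF V_int Vf_nonneg]) (use sumEV in \<open>simp add: EV_def\<close>)


lemma alpha_prefix2: "\<forall>t<Suc k. c t = c' t \<Longrightarrow> alpha c k i = alpha c' k i"
  by (rule alpha_prefix) (simp add: less_Suc_eq_le)

definition "qi i = (\<Sum>x\<in>S. pw x * (if i = fst x \<or> i = snd x then 1 else 0))"

lemma qi_pos:
  assumes i: "i \<in> {1..N}"
  shows "qi i \<ge> 1 / (real N)\<^sup>2"
proof -
  obtain j where ij: "EC i j" using nbr[OF i] by blast
  have x: "(i,j) \<in> S" using ij i unfolding pairS_def by auto
  have "1 / (real N)\<^sup>2 \<le> pw (i,j) * (if i = fst (i,j) \<or> i = snd (i,j) then 1 else 0)"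
    using pw_lb[OF x] by simp
  also have "\<dots> \<le> qi i" unfolding qi_def
    by (rule member_le_sum[OF x]) (auto intro!: mult_nonneg_nonneg pw_nonneg simp: finite_S)
  finally show ?thesis .
qed

lemma A_int: "integrable M (\<lambda>\<omega>. (alpha (cw \<omega>) k i)\<^sup>2)"
proof -
  have "\<And>c c'. (\<forall>t<Suc k. c t = c' t) \<Longrightarrow> (alpha c k i)\<^sup>2 = (alpha c' k i)\<^sup>2"
    using alpha_prefix2 by metis
  then show ?thesis using prefix_expect[of "Suc k" "\<lambda>c. (alpha c k i)\<^sup>2"] by blast
qed

definition "EA i k = expectation (\<lambda>\<omega>. (alpha (cw \<omega>) k i)\<^sup>2)"

lemma alpha_step:
  "integrable M (\<lambda>\<omega>. if upd (cw \<omega>) i (Suc k) then (alpha (cw \<omega>) k i)\<^sup>2 else 0) \<and>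
   expectation (\<lambda>\<omega>. if upd (cw \<omega>) i (Suc k) then (alpha (cw \<omega>) k i)\<^sup>2 else 0) = qi i * EA i k"
proof -
  let ?P = "\<lambda>c x. (if i = fst x \<or> i = snd x then 1 else 0) * (alpha c k i)\<^sup>2"
  have pre: "\<And>c c' x. (\<forall>t<Suc k. c t = c' t) \<Longrightarrow> ?P c x = ?P c' x"
    using alpha_prefix2 by metis
  note OS = one_step[of "Suc k" ?P, OF pre]
  have e1: "(\<lambda>\<omega>. if upd (cw \<omega>) i (Suc k) then (alpha (cw \<omega>) k i)\<^sup>2 else 0) = (\<lambda>\<omega>. ?P (cw \<omega>) (C (Suc k) \<omega>))"
    unfolding upd_def by auto
  have e2: "(\<lambda>\<omega>. \<Sum>x\<in>S. pw x * ?P (cw \<omega>) x) = (\<lambda>\<omega>. qi i * (alpha (cw \<omega>) k i)\<^sup>2)"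
  proof
    fix \<omega>
    have "(\<Sum>x\<in>S. pw x * ?P (cw \<omega>) x) = (\<Sum>x\<in>S. (pw x * (if i = fst x \<or> i = snd x then 1 else 0)) * (alpha (cw \<omega>) k i)\<^sup>2)"
      by (intro sum.cong refl) (simp add: mult_ac)
    also have "\<dots> = qi i * (alpha (cw \<omega>) k i)\<^sup>2"
      unfolding qi_def by (rule sum_distrib_right[symmetric])
    finally show "(\<Sum>x\<in>S. pw x * ?P (cw \<omega>) x) = qi i * (alpha (cw \<omega>) k i)\<^sup>2" .
  qed
  show ?thesis unfolding e1 using OS unfolding e2 EA_def by simp
qed

lemma sumEA:
  assumes i: "i \<in> {1..N}"
  shows "(\<Sum>k<n. EA i k) \<le> 8 * (real N)\<^sup>2"
proof -
  have "qi i * (\<Sum>k<n. EA i k) = (\<Sum>k<n. expectation (\<lambda>\<omega>. if upd (cw \<omega>) i (Suc k) then (alpha (cw \<omega>) k i)\<^sup>2 else 0))"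
    using alpha_step by (simp add: sum_distrib_left)
  also have "\<dots> = expectation (\<lambda>\<omega>. \<Sum>k<n. if upd (cw \<omega>) i (Suc k) then (alpha (cw \<omega>) k i)\<^sup>2 else 0)"
    using alpha_step by (simp add: Bochner_Integration.integral_sum)
  also have "\<dots> \<le> expectation (\<lambda>\<omega>. 8)"
    using alpha_step alpha_next_sum by (intro integral_mono) auto
  also have "\<dots> = 8" by (simp add: prob_space)
  finally have 1: "qi i * (\<Sum>k<n. EA i k) \<le> 8" .
  have S0: "(\<Sum>k<n. EA i k) \<ge> 0" unfolding EA_def by (intro sum_nonneg) simp
  have N0: "real N > 0" using Npos by simp
  have "(1 / (real N)\<^sup>2) * (\<Sum>k<n. EA i k) \<le> qi i * (\<Sum>k<n. EA i k)"
    using qi_pos[OF i] S0 by (intro mult_right_mono) auto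
  then have "(1 / (real N)\<^sup>2) * (\<Sum>k<n. EA i k) \<le> 8" using 1 by linarith
  then show ?thesis using N0 by (simp add: field_simps)
qed

lemma AE_A:
  assumes i: "i \<in> {1..N}"
  shows "AE \<omega> in M. summable (\<lambda>k. (alpha (cw \<omega>) k i)\<^sup>2)"
  by (rule AE_summable[OF A_int]) (use sumEA[OF i] in \<open>simp_all add: EA_def\<close>)

end

lemma max_tri:
  assumes mx: "max_triangle_free_spanning N EI Gm" and EIg: "graph_on N EI"
    and e: "EI i j" and ng: "\<not> Gm i j"
  shows "\<exists>k. Gm i k \<and> Gm k j"
proof -
  have gG: "graph_on N Gm" and tf: "triangle_free N Gm"
    and mxl: "\<not> triangle_free N (\<lambda>a b. Gm a b \<or> (a = i \<and> b = j) \<or> (a = j \<and> b = i))"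
    using mx e ng unfolding max_triangle_free_spanning_def by auto
  have ij: "i \<noteq> j" using EIg e unfolding graph_on_def by blast
  have sym: "\<And>x y. Gm x y \<Longrightarrow> Gm y x" and irr: "\<And>x. \<not> Gm x x"
    using gG unfolding graph_on_def by blast+
  obtain a b c where abc: "a \<in> {1..N}" "b \<in> {1..N}" "c \<in> {1..N}"
    and h: "Gm a b \<or> (a = i \<and> b = j) \<or> (a = j \<and> b = i)"
       "Gm b c \<or> (b = i \<and> c = j) \<or> (b = j \<and> c = i)"
       "Gm a c \<or> (a = i \<and> c = j) \<or> (a = j \<and> c = i)"
    using mxl unfolding triangle_free_def by blast
  have ntri: "\<not> (Gm a b \<and> Gm b c \<and> Gm a c)"
    using tf abc unfolding triangle_free_def by blast
  show ?thesis using h ntri sym irr ij by metis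
qed

lemma nbr_EC:
  assumes mx: "max_triangle_free_spanning N EI Gm" and EIg: "graph_on N EI"
    and conn: "connected_graph N EI" and N2: "N \<ge> 2" and GmEC: "\<forall>i j. Gm i j \<longrightarrow> EC i j"
    and i: "i \<in> {1..N}"
  shows "\<exists>j. EC i j"
proof -
  obtain j where j: "j \<in> {1..N}" "j \<noteq> i"
  proof (cases "i = 1")
    case True
    then show ?thesis using that[of 2] N2 by auto
  next
    case False
    then show ?thesis using that[of 1] N2 by auto
  qed
  have "EI\<^sup>*\<^sup>* i j" using conn i j unfolding connected_graph_def by blast
  then obtain k where k: "EI i k" using j(2) by (metis converse_rtranclpE)
  show ?thesis
  proof (cases "Gm i k")
    case True
    then show ?thesis using GmEC by blast
  next
    case False
    then obtain k' where "Gm i k'" using max_tri[OF mx EIg k] by blast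
    then show ?thesis using GmEC by blast
  qed
qed

lemma am_facts:
  assumes "N \<ge> 1"
  shows "alpha_max N c k \<ge> 0 \<and> (alpha_max N c k)\<^sup>2 \<le> (\<Sum>i=1..N. (alpha c k i)\<^sup>2)"
proof -
  have "alpha_max N c k \<in> (\<lambda>i. alpha c k i) ` {1..N}"
    unfolding alpha_max_def using assms by (intro Max_in) auto
  then obtain i0 where i0: "i0 \<in> {1..N}" "alpha_max N c k = alpha c k i0" by blast
  have "(alpha c k i0)\<^sup>2 \<le> (\<Sum>i=1..N. (alpha c k i)\<^sup>2)"
    using i0 by (intro member_le_sum) auto
  then show ?thesis using i0 by (simp add: alpha_def)
qed

theorem theorem1:
  fixes N :: nat and EI EC Gm :: "nat \<Rightarrow> nat \<Rightarrow> bool"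
    and Om :: "nat \<Rightarrow> real set"
    and J G :: "nat \<Rightarrow> real \<Rightarrow> (nat \<Rightarrow> real) \<Rightarrow> real"
    and x0 :: "nat \<Rightarrow> real"
    and M :: "'a measure" and C :: "nat \<Rightarrow> 'a \<Rightarrow> nat \<times> nat"
  assumes N2: "N \<ge> 2"
    and EI_graph: "graph_on N EI"
    and EI_conn: "connected_graph N EI"
    and EI_not_complete: "\<not> complete_graph N EI"
    and Gm_max: "max_triangle_free_spanning N EI Gm"
    and EC_graph: "graph_on N EC"
    and Gm_EC: "\<forall>i j. Gm i j \<longrightarrow> EC i j"
    and EC_EI: "\<forall>i j. EC i j \<longrightarrow> EI i j"
    and Om_ne: "\<forall>i\<in>{1..N}. Om i \<noteq> {}"
    and Om_compact: "\<forall>i\<in>{1..N}. compact (Om i)"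
    and Om_convex: "\<forall>i\<in>{1..N}. convex (Om i)"
    and J_deriv: "\<forall>i\<in>{1..N}. \<forall>x\<in>Om i. \<forall>y\<in>Dom_other EI N Om i.
                    ((\<lambda>t. J i t y) has_real_derivative G i x y) (at x within Om i)"
    and G_cont: "\<forall>i\<in>{1..N}. continuous_on (Om i \<times> Dom_other EI N Om i) (\<lambda>(x, y). G i x y)"
    and J_cont: "\<forall>i\<in>{1..N}. continuous_on (Om i \<times> Dom_other EI N Om i) (\<lambda>(x, y). J i x y)"
    and J_convex: "\<forall>i\<in>{1..N}. \<forall>y\<in>Dom_other EI N Om i. convex_on (Om i) (\<lambda>t. J i t y)"
    and x0_in: "\<forall>i\<in>{1..N}. \<forall>j\<in>nbIt EI N i. x0 (spos EI N i j) \<in> Om j"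
    and M_prob: "prob_space M"
    and C_indep: "prob_space.indep_vars M (\<lambda>_. count_space UNIV) C UNIV"
    and C_distr: "\<forall>k i j. measure M {\<omega> \<in> space M. C k \<omega> = (i, j)} =
                    (if i \<in> {1..N} \<and> EC i j then 1 / (real N * real (card {l. EC i l})) else 0)"
  shows "(AE \<omega> in M. summable (\<lambda>k. alpha_max N (\<lambda>t. C t \<omega>) k *
            vnorm (mtot EI N) (\<lambda>p. gossip_state EI N Om G x0 (\<lambda>t. C t \<omega>) k p
                                  - Zvec EI N (gossip_state EI N Om G x0 (\<lambda>t. C t \<omega>) k) p)))
       \<and> (AE \<omega> in M. summable (\<lambda>k. (vnorm (mtot EI N) (\<lambda>p. gossip_state EI N Om G x0 (\<lambda>t. C t \<omega>) k p
                                  - Zvec EI N (gossip_state EI N Om G x0 (\<lambda>t. C t \<omega>) k) p))\<^sup>2))"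
proof -
  have N1: "N \<ge> 1" using N2 by simp
  have tri: "EC i j \<or> (\<exists>k. EC i k \<and> EC k j)" if eij: "EI i j" for i j
  proof (cases "Gm i j")
    case True
    then show ?thesis using Gm_EC by blast
  next
    case False
    then obtain k where "Gm i k" "Gm k j" using max_tri[OF Gm_max EI_graph eij False] by blast
    then show ?thesis using Gm_EC by blast
  qed
  have nbr: "\<And>i. i \<in> {1..N} \<Longrightarrow> \<exists>j. EC i j"
    by (rule nbr_EC[OF Gm_max EI_graph EI_conn N2 Gm_EC])
  have distr: "\<And>k x. measure M {\<omega> \<in> space M. C k \<omega> = x} =
        (if x \<in> pairS N EC then 1 / (real N * real (card {l. EC (fst x) l})) else 0)"
  proof -
    fix k and x :: "nat \<times> nat"
    obtain i j where x: "x = (i,j)" by fastforce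
    show "measure M {\<omega> \<in> space M. C k \<omega> = x} =
        (if x \<in> pairS N EC then 1 / (real N * real (card {l. EC (fst x) l})) else 0)"
      using C_distr unfolding x pairS_def by simp
  qed
  have loc: "gprob N EI Om G x0 EC M C"
  proof (intro gprob.intro gfull.intro gstate.intro gsetup.intro gstate_axioms.intro gfull_axioms.intro gprob_axioms.intro)
    show "graph_on N EI" by (rule EI_graph)
    show "prob_space M" by (rule M_prob)
  qed (use EC_EI Om_ne Om_compact Om_convex x0_in G_cont tri nbr N1 C_indep distr in auto)
  interpret gprob N EI Om G x0 EC M C by (rule loc)
  have AEV: "AE \<omega> in M. summable (\<lambda>k. Vf (st (cw \<omega>) k))" by (rule AE_V)
  have AEA: "AE \<omega> in M. \<forall>i\<in>{1..N}. summable (\<lambda>k. (alpha (cw \<omega>) k i)\<^sup>2)"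
    by (rule AE_finite_allI) (auto intro: AE_A)
  let ?e = "\<lambda>\<omega> k. vnorm (mtot EI N) (\<lambda>p. gossip_state EI N Om G x0 (\<lambda>t. C t \<omega>) k p
                                  - Zvec EI N (gossip_state EI N Om G x0 (\<lambda>t. C t \<omega>) k) p)"
  have e2: "(?e \<omega> k)\<^sup>2 \<le> Vf (st (cw \<omega>) k)" for \<omega> k
    unfolding Vf_def by (rule vnorm_Z)
  have e0: "?e \<omega> k \<ge> 0" for \<omega> k
    unfolding vnorm_def by (simp add: sum_nonneg)
  show ?thesis
  proof
    show "AE \<omega> in M. summable (\<lambda>k. alpha_max N (\<lambda>t. C t \<omega>) k * ?e \<omega> k)"
      using AEV AEA
    proof eventually_elim
      case (elim \<omega>)
      have sA: "summable (\<lambda>k. \<Sum>i=1..N. (alpha (cw \<omega>) k i)\<^sup>2)"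
        using elim(2) by (intro summable_sum) auto
      have sB: "summable (\<lambda>k. ((\<Sum>i=1..N. (alpha (cw \<omega>) k i)\<^sup>2) + Vf (st (cw \<omega>) k)) / 2)"
        using sA elim(1) by (intro summable_divide summable_add)
      show ?case
      proof (rule summable_comparison_test'[OF sB])
        fix k :: nat
        let ?a = "alpha_max N (\<lambda>t. C t \<omega>) k"
        have a: "?a \<ge> 0" "?a\<^sup>2 \<le> (\<Sum>i=1..N. (alpha (cw \<omega>) k i)\<^sup>2)" using am_facts[OF N1] by auto
        have "?a * ?e \<omega> k \<le> (?a\<^sup>2 + (?e \<omega> k)\<^sup>2) / 2"
        proof -
          have "0 \<le> (?a - ?e \<omega> k)\<^sup>2" by simp
          then show ?thesis by (simp add: power2_eq_square algebra_simps)
        qed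
        also have "\<dots> \<le> ((\<Sum>i=1..N. (alpha (cw \<omega>) k i)\<^sup>2) + Vf (st (cw \<omega>) k)) / 2"
          using a e2[of \<omega> k] by simp
        finally show "norm (?a * ?e \<omega> k) \<le> ((\<Sum>i=1..N. (alpha (cw \<omega>) k i)\<^sup>2) + Vf (st (cw \<omega>) k)) / 2"
          using a e0[of \<omega> k] by simp
      qed
    qed
    show "AE \<omega> in M. summable (\<lambda>k. (?e \<omega> k)\<^sup>2)"
      using AEV
    proof eventually_elim
      case (elim \<omega>)
      show ?case
        by (rule summable_comparison_test'[OF elim]) (use e2 in simp)
    qed
  qed
qed

end
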